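(* Let $T>0$, $0<\epsilon\le1$, $I=(0,1)$, $\kappa^0\in\mathrm{Lip}(I)$, $\rho^0\in C_0^\infty(I)$, and let $\hat g$ be as in the context. Let $$c_1=\|(\rho^0_{xx})^2\|_{L^\infty(I)}+\|\rho^0_x\|_{L^\infty(I)}\|\rho^0_{xxx}\|_{L^\infty(I)},\qquad c_2=(\|\kappa^0_x\|_{L^\infty(I)}+1)^2,$$ and $\bar S(x,t)=\sqrt{2c_1t+c_2}$. Then $\bar S$ is an entropy super-solution of $w_t+(\hat g\,f_\epsilon(w))_x=0$ in $Q_T$ with initial datum $w(\cdot,0)=\|\kappa^0_x\|_{L^\infty(I)}+1$.
   Context: $Q_T=\mathbb{R}\times(0,T)$. $\rho$ solves $\rho_t=\rho_{xx}$ in $I\times(0,\infty)$, $\rho(\cdot,0)=\rho^0$, $\rho(0,t)=\rho(1,t)=0$; $\hat\rho$ equals $\rho$ on $[0,1]\times[0,T]$, $\hat\rho(x,t)=-\rho(2-x,t)$ for $x\in(1,2]$, extended $2$-periodically in $x$ to $\mathbb{R}\times[0,T]$; $\hat g=-\hat\rho_t\hat\rho_x$. For $a>0$, $f_a(x)=1/x$ if $x\ge a$, $f_a(x)=\frac{2a-x}{a^2+a^2(x-a)^2}$ if $x<a$. Entropy super-solution of $v_t+(gf(v))_x=0$, $v(\cdot,0)=v^0$: $v\in L^\infty(Q_T)$ with $\int_{Q_T}[\eta(v)\phi_t+\Phi(v)g\phi_x+h(v)g_x\phi]\,dx\,dt+\int_{\mathbb{R}}\eta(v^0)\phi(x,0)\,dx\ge0$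 for every $\phi\in C_0^1(\mathbb{R}\times[0,T);[0,\infty))$, every non-increasing convex $\eta\in C^1$, $\Phi\in C^1$ with $\Phi'=f'\eta'$ and $h=\Phi-f\eta'$. *)

theory Defs
  imports "HOL-Analysis.Analysis" "HOL-Probability.Essential_Supremum"
begin

definition I_int :: "real set" where "I_int = {0<..<1}"

definition Linf_I :: "(real \<Rightarrow> real) \<Rightarrow> real" where
  "Linf_I u = real_of_ereal (esssup (lebesgue_on I_int) (\<lambda>x. ereal \<bar>u x\<bar>))"

definition C0_inf_I :: "(real \<Rightarrow> real) \<Rightarrow> bool" where
  "C0_inf_I u \<longleftrightarrow> (\<forall>n. \<forall>x. ((deriv ^^ n) u) differentiable (at x))
      \<and> (\<exists>a b. 0 < a \<and> a \<le> b \<and> b < 1 \<and> (\<forall>x. x \<notin> {a..b} \<longrightarrow> u x = 0))"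

definition Lip_I :: "(real \<Rightarrow> real) \<Rightarrow> bool" where
  "Lip_I u \<longleftrightarrow> (\<exists>L. L-lipschitz_on I_int u)"

definition heat_solution :: "(real \<Rightarrow> real \<Rightarrow> real) \<Rightarrow> (real \<Rightarrow> real) \<Rightarrow> bool" where
  "heat_solution \<rho> \<rho>0 \<longleftrightarrow>
     continuous_on ({0..1} \<times> {0..}) (\<lambda>(x,t). \<rho> x t)
   \<and> (\<forall>x\<in>{0..1}. \<rho> x 0 = \<rho>0 x)
   \<and> (\<forall>t>0. \<rho> 0 t = 0 \<and> \<rho> 1 t = 0)
   \<and> (\<forall>x\<in>{0<..<1}. \<forall>t>0.
        (\<forall>y\<in>{0<..<1}. (\<lambda>z. \<rho> z t) differentiable (at y))
      \<and> (\<lambda>y. deriv (\<lambda>z. \<rho> z t) y) differentiable (at x)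
      \<and> ((\<lambda>s. \<rho> x s) has_real_derivative
            deriv (\<lambda>y. deriv (\<lambda>z. \<rho> z t) y) x) (at t))"

text \<open>Odd reflection across x = 1 and 2-periodic extension.\<close>
definition rho_hat :: "(real \<Rightarrow> real \<Rightarrow> real) \<Rightarrow> real \<Rightarrow> real \<Rightarrow> real" where
  "rho_hat \<rho> x t = (let y = x - 2 * of_int \<lfloor>x / 2\<rfloor> in
      if y \<le> 1 then \<rho> y t else - \<rho> (2 - y) t)"

definition g_hat :: "(real \<Rightarrow> real \<Rightarrow> real) \<Rightarrow> real \<Rightarrow> real \<Rightarrow> real" where
  "g_hat \<rho> x t = - (deriv (\<lambda>s. rho_hat \<rho> x s) t * deriv (\<lambda>y. rho_hat \<rho> y t) x)"

definition f_a :: "real \<Rightarrow> real \<Rightarrow> real" where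
  "f_a a x = (if x \<ge> a then 1 / x else (2 * a - x) / (a\<^sup>2 + a\<^sup>2 * (x - a)\<^sup>2))"

text \<open>Test functions in C_0^1(R x [0,T); [0,inf)), given with their partial derivatives.\<close>
definition test_fun :: "real \<Rightarrow> (real \<Rightarrow> real \<Rightarrow> real) \<Rightarrow> (real \<Rightarrow> real \<Rightarrow> real)
    \<Rightarrow> (real \<Rightarrow> real \<Rightarrow> real) \<Rightarrow> bool" where
  "test_fun T \<phi> \<phi>x \<phi>t \<longleftrightarrow>
     (\<forall>x. \<forall>t\<in>{0..<T}. \<phi> x t \<ge> 0)
   \<and> (\<forall>x. \<forall>t\<in>{0..<T}. ((\<lambda>y. \<phi> y t) has_real_derivative \<phi>x x t) (at x))
   \<and> (\<forall>x. \<forall>t\<in>{0..<T}. ((\<lambda>s. \<phi> x s) has_real_derivative \<phi>t x t) (at t within {0..<T}))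
   \<and> continuous_on (UNIV \<times> {0..<T}) (\<lambda>(x,t). \<phi> x t)
   \<and> continuous_on (UNIV \<times> {0..<T}) (\<lambda>(x,t). \<phi>x x t)
   \<and> continuous_on (UNIV \<times> {0..<T}) (\<lambda>(x,t). \<phi>t x t)
   \<and> (\<exists>K. compact K \<and> K \<subseteq> UNIV \<times> {0..<T}
          \<and> (\<forall>x. \<forall>t\<in>{0..<T}. (x, t) \<notin> K \<longrightarrow> \<phi> x t = 0))"

definition entropy_pair :: "(real \<Rightarrow> real) \<Rightarrow> (real \<Rightarrow> real) \<Rightarrow> (real \<Rightarrow> real)
    \<Rightarrow> (real \<Rightarrow> real) \<Rightarrow> bool" where
  "entropy_pair f \<eta> \<eta>' \<Phi> \<longleftrightarrow>
     (\<forall>u. (\<eta> has_real_derivative \<eta>' u) (at u)) \<and> continuous_on UNIV \<eta>'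
   \<and> antimono \<eta> \<and> convex_on UNIV \<eta>
   \<and> (\<forall>u. (\<Phi> has_real_derivative (deriv f u * \<eta>' u)) (at u))
   \<and> continuous_on UNIV (\<lambda>u. deriv f u * \<eta>' u)"

definition Q_T :: "real \<Rightarrow> (real \<times> real) set" where
  "Q_T T = UNIV \<times> {0<..<T}"

text \<open>Entropy super-solution of v_t + (g f(v))_x = 0 in Q_T with v(.,0) = v0;
  gx is the x-derivative of g. The integrands are required to be integrable.\<close>
definition entropy_supersol :: "real \<Rightarrow> (real \<Rightarrow> real \<Rightarrow> real) \<Rightarrow> (real \<Rightarrow> real \<Rightarrow> real)
    \<Rightarrow> (real \<Rightarrow> real) \<Rightarrow> (real \<Rightarrow> real \<Rightarrow> real) \<Rightarrow> (real \<Rightarrow> real) \<Rightarrow> bool" where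
  "entropy_supersol T g gx f v v0 \<longleftrightarrow>
     (\<lambda>(x,t). v x t) \<in> borel_measurable (lebesgue_on (Q_T T))
   \<and> (\<exists>M. AE p in lebesgue_on (Q_T T). \<bar>(\<lambda>(x,t). v x t) p\<bar> \<le> M)
   \<and> (\<forall>\<phi> \<phi>x \<phi>t \<eta> \<eta>' \<Phi>. test_fun T \<phi> \<phi>x \<phi>t \<longrightarrow> entropy_pair f \<eta> \<eta>' \<Phi> \<longrightarrow>
        (let h = (\<lambda>u. \<Phi> u - f u * \<eta>' u);
             F = (\<lambda>(x,t). \<eta> (v x t) * \<phi>t x t + \<Phi> (v x t) * g x t * \<phi>x x t
                          + h (v x t) * gx x t * \<phi> x t);
             G = (\<lambda>x. \<eta> (v0 x) * \<phi> x 0)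
         in integrable (lebesgue_on (Q_T T)) F \<and> integrable lebesgue G
            \<and> (integral\<^sup>L (lebesgue_on (Q_T T)) F) + (integral\<^sup>L lebesgue G) \<ge> 0))"

end

theory Submission
  imports Defs "HOL-Probability.Probability" "HOL-Real_Asymp.Real_Asymp"
begin

abbreviation N :: "real \<Rightarrow> real" where "N \<equiv> std_normal_density"

lemma N_nonneg: "0 \<le> N w"
  by (rule normal_density_nonneg)
lemma N_int: "integrable lborel N"
  using integrable_std_normal_moment[of 0] by simp
lemma N_integral: "(\<integral>w. N w \<partial>lborel) = 1"
  using integral_std_normal_moment_even[of 0] by simp
lemma N_abs_int: "integrable lborel (\<lambda>w. N w * \<bar>w\<bar>)"
  using integrable_std_normal_moment_abs[of 1] by simp
lemma N_cont: "continuous_on UNIV N"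
  unfolding std_normal_density_def by (intro continuous_intros) auto
lemma N_deriv: "(N has_real_derivative (- w * N w)) (at w)"
  unfolding std_normal_density_def
  by (auto intro!: derivative_eq_intros simp: power2_eq_square field_simps)
lemma N_at_top: "(N \<longlongrightarrow> 0) at_top"
  unfolding std_normal_density_def by real_asymp
lemma N_at_bot: "(N \<longlongrightarrow> 0) at_bot"
  unfolding std_normal_density_def by real_asymp

lemma lip_from_deriv:
  assumes d: "\<And>y. (Q has_real_derivative Q' y) (at y)" and b: "\<And>y. \<bar>Q' y\<bar> \<le> B"
  shows "\<bar>Q a - Q c\<bar> \<le> B * \<bar>a - c\<bar>"
proof -
  have *: "\<bar>Q v - Q u\<bar> \<le> B * \<bar>v - u\<bar>" if uv: "u < v" for u v
  proof -
    obtain z where "Q v - Q u = (v - u) * Q' z"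
      using MVT2[OF uv, of Q Q'] d by blast
    then have "\<bar>Q v - Q u\<bar> = \<bar>v - u\<bar> * \<bar>Q' z\<bar>" by (simp add: abs_mult)
    also have "\<dots> \<le> \<bar>v - u\<bar> * B" using b by (intro mult_left_mono) auto
    finally show ?thesis by (simp add: mult.commute)
  qed
  consider "c < a" | "a = c" | "a < c" by linarith
  then show ?thesis
  proof cases
    case 3 then show ?thesis using *[OF 3] by (simp add: abs_minus_commute)
  qed (use * in auto)
qed

lemma DCT_at:
  fixes S :: "'p::first_countable_topology \<Rightarrow> real \<Rightarrow> real"
  assumes meas: "\<And>p. S p \<in> borel_measurable lborel"
    and int: "integrable lborel W"
    and lim: "\<And>w. ((\<lambda>p. S p w) \<longlongrightarrow> L w) (at p0 within X)"
    and bnd: "\<And>p w. \<bar>S p w\<bar> \<le> W w"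
    and Lm: "L \<in> borel_measurable lborel"
  shows "((\<lambda>p. \<integral>w. S p w \<partial>lborel) \<longlongrightarrow> (\<integral>w. L w \<partial>lborel)) (at p0 within X)"
  unfolding tendsto_at_iff_sequentially comp_def
proof (intro allI impI)
  fix Xs :: "nat \<Rightarrow> 'p" assume X1: "\<forall>i. Xs i \<in> X - {p0}" and X2: "Xs \<longlonglongrightarrow> p0"
  show "(\<lambda>i. \<integral>w. S (Xs i) w \<partial>lborel) \<longlonglongrightarrow> (\<integral>w. L w \<partial>lborel)"
  proof (rule integral_dominated_convergence[where w=W])
    show "AE w in lborel. (\<lambda>i. S (Xs i) w) \<longlonglongrightarrow> L w"
    proof (rule AE_I2)
      fix w show "(\<lambda>i. S (Xs i) w) \<longlonglongrightarrow> L w"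
        using lim[of w] X1 X2 unfolding tendsto_at_iff_sequentially comp_def by blast
    qed
  qed (use meas int bnd Lm in auto)
qed

definition Avg :: "(real \<Rightarrow> real) \<Rightarrow> real \<Rightarrow> real \<Rightarrow> real" where
  "Avg Q x s = (\<integral>w. N w * Q (x - s * w) \<partial>lborel)"

definition bc :: "(real \<Rightarrow> real) \<Rightarrow> real \<Rightarrow> bool" where
  "bc Q B \<longleftrightarrow> continuous_on UNIV Q \<and> (\<forall>y. \<bar>Q y\<bar> \<le> B)"

lemma bc_cont: assumes "bc Q B" shows "continuous_on UNIV (\<lambda>w. N w * Q (x - s * w))"
proof -
  have cQ: "continuous_on UNIV Q" using assms unfolding bc_def by auto
  have "continuous_on UNIV (\<lambda>w. Q (x - s * w))"
    by (rule continuous_on_compose2[OF cQ]) (auto intro: continuous_intros)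
  then show ?thesis by (intro continuous_on_mult N_cont)
qed

lemma bc_meas: assumes "bc Q B" shows "(\<lambda>w. N w * Q (x - s * w)) \<in> borel_measurable lborel"
  using borel_measurable_continuous_onI[OF bc_cont[OF assms]] by simp

lemma bc_int: assumes "bc Q B" shows "integrable lborel (\<lambda>w. N w * Q (x - s * w))"
proof (rule Bochner_Integration.integrable_bound[where f="\<lambda>w. B * N w"])
  show "integrable lborel (\<lambda>w. B * N w)" using N_int by simp
  show "(\<lambda>w. N w * Q (x - s * w)) \<in> borel_measurable lborel" using bc_meas[OF assms] .
  show "AE w in lborel. norm (N w * Q (x - s * w)) \<le> norm (B * N w)"
  proof (rule AE_I2)
    fix w
    have "\<bar>Q (x - s * w)\<bar> \<le> B" using assms unfolding bc_def by auto
    then have B: "0 \<le> B" by linarith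
    have "\<bar>N w * Q (x - s * w)\<bar> = N w * \<bar>Q (x - s * w)\<bar>" using N_nonneg by (simp add: abs_mult)
    also have "\<dots> \<le> N w * B" using \<open>\<bar>Q (x - s * w)\<bar> \<le> B\<close> N_nonneg by (intro mult_left_mono) auto
    finally show "norm (N w * Q (x - s * w)) \<le> norm (B * N w)" using B N_nonneg by (simp add: mult.commute)
  qed
qed

lemma Avg_bound: assumes "bc Q B" shows "\<bar>Avg Q x s\<bar> \<le> B"
proof -
  have "\<bar>Avg Q x s\<bar> \<le> (\<integral>w. \<bar>N w * Q (x - s * w)\<bar> \<partial>lborel)"
    unfolding Avg_def by (rule integral_abs_bound)
  also have "\<dots> \<le> (\<integral>w. B * N w \<partial>lborel)"
  proof (rule integral_mono)
    show "integrable lborel (\<lambda>w. \<bar>N w * Q (x - s * w)\<bar>)" using bc_int[OF assms] by auto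
    show "integrable lborel (\<lambda>w. B * N w)" using N_int by simp
    fix w
    have "\<bar>Q (x - s * w)\<bar> \<le> B" using assms unfolding bc_def by auto
    then have "N w * \<bar>Q (x - s * w)\<bar> \<le> N w * B" using N_nonneg by (intro mult_left_mono) auto
    then show "\<bar>N w * Q (x - s * w)\<bar> \<le> B * N w" using N_nonneg
      by (simp add: abs_mult mult.commute)
  qed
  also have "\<dots> = B" using N_integral by simp
  finally show ?thesis .
qed

lemma Avg_zero: "Avg Q x 0 = Q x"
  unfolding Avg_def using N_integral by simp

lemma Avg_cont: assumes "bc Q B" shows "continuous_on UNIV (\<lambda>p. Avg Q (fst p) (snd p))"
  unfolding continuous_on_def
proof
  fix p0 :: "real \<times> real"
  show "((\<lambda>p. Avg Q (fst p) (snd p)) \<longlongrightarrow> Avg Q (fst p0) (snd p0)) (at p0 within UNIV)"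
    unfolding Avg_def
  proof (rule DCT_at[where W="\<lambda>w. B * N w"])
    show "\<And>p. (\<lambda>w. N w * Q (fst p - snd p * w)) \<in> borel_measurable lborel" using bc_meas[OF assms] .
    show "integrable lborel (\<lambda>w. B * N w)" using N_int by simp
    show "(\<lambda>w. N w * Q (fst p0 - snd p0 * w)) \<in> borel_measurable lborel" using bc_meas[OF assms] .
    fix w
    have cQ: "continuous_on UNIV Q" using assms unfolding bc_def by auto
    have "continuous_on UNIV (\<lambda>p::real\<times>real. N w * Q (fst p - snd p * w))"
      by (intro continuous_on_mult continuous_on_const continuous_on_compose2[OF cQ] continuous_intros) auto
    then show "((\<lambda>p. N w * Q (fst p - snd p * w)) \<longlongrightarrow> N w * Q (fst p0 - snd p0 * w)) (at p0 within UNIV)"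
      unfolding continuous_on_def by (cases p0) auto
    fix p :: "real \<times> real"
    have "\<bar>Q (fst p - snd p * w)\<bar> \<le> B" using assms unfolding bc_def by auto
    then have "N w * \<bar>Q (fst p - snd p * w)\<bar> \<le> N w * B" using N_nonneg by (intro mult_left_mono) auto
    then show "\<bar>N w * Q (fst p - snd p * w)\<bar> \<le> B * N w" using N_nonneg
      by (simp add: abs_mult mult.commute)
  qed
qed

lemma quot_bound:
  assumes d: "\<And>y. (Q has_real_derivative Q' y) (at y)" and b: "bc Q' B'"
  shows "\<bar>(Q a - Q c) / h\<bar> \<le> B' * \<bar>(a - c) / h\<bar>"
proof -
  have "\<bar>Q a - Q c\<bar> \<le> B' * \<bar>a - c\<bar>"
    using lip_from_deriv[OF d, of B'] b unfolding bc_def by auto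
  then have "\<bar>Q a - Q c\<bar> / \<bar>h\<bar> \<le> B' * \<bar>a - c\<bar> / \<bar>h\<bar>"
    by (simp add: divide_right_mono)
  then show ?thesis by (simp add: abs_divide)
qed

lemma bc_nonneg: "bc Q B \<Longrightarrow> 0 \<le> B"
  unfolding bc_def by (meson abs_ge_zero order_trans)

lemma Avg_diff_quot:
  assumes "bc Q B"
  shows "(Avg Q x1 s1 - Avg Q x0 s0) / h = (\<integral>w. N w * ((Q (x1 - s1 * w) - Q (x0 - s0 * w)) / h) \<partial>lborel)"
proof -
  have "Avg Q x1 s1 - Avg Q x0 s0 = (\<integral>w. N w * Q (x1 - s1 * w) - N w * Q (x0 - s0 * w) \<partial>lborel)"
    unfolding Avg_def using Bochner_Integration.integral_diff[OF bc_int[OF assms] bc_int[OF assms], of x1 s1 x0 s0] by simp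
  then have "(Avg Q x1 s1 - Avg Q x0 s0) / h = (\<integral>w. (N w * Q (x1 - s1 * w) - N w * Q (x0 - s0 * w)) / h \<partial>lborel)"
    by simp
  also have "\<dots> = (\<integral>w. N w * ((Q (x1 - s1 * w) - Q (x0 - s0 * w)) / h) \<partial>lborel)"
    by (simp add: right_diff_distrib)
  finally show ?thesis .
qed

lemma quot_meas:
  assumes "bc Q B"
  shows "(\<lambda>w. N w * ((Q (x1 - s1 * w) - Q (x0 - s0 * w)) / h)) \<in> borel_measurable lborel"
proof -
  have "(\<lambda>w. (N w * Q (x1 - s1 * w) - N w * Q (x0 - s0 * w)) / h) \<in> borel_measurable lborel"
    using bc_meas[OF assms] by measurable
  then show ?thesis by (simp add: right_diff_distrib)
qed

lemma Avg_deriv_x: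
  assumes Q: "bc Q B" and d: "\<And>y. (Q has_real_derivative Q' y) (at y)" and Q': "bc Q' B'"
  shows "((\<lambda>x. Avg Q x s) has_real_derivative Avg Q' x s) (at x)"
  unfolding DERIV_def
proof -
  have "((\<lambda>h. \<integral>w. N w * ((Q (x + h - s * w) - Q (x - s * w)) / h) \<partial>lborel) \<longlongrightarrow> Avg Q' x s) (at 0 within UNIV)"
    unfolding Avg_def
  proof (rule DCT_at[where W="\<lambda>w. B' * N w"])
    show "\<And>p. (\<lambda>w. N w * ((Q (x + p - s * w) - Q (x - s * w)) / p)) \<in> borel_measurable lborel"
      using quot_meas[OF Q] .
    show "integrable lborel (\<lambda>w. B' * N w)" using N_int by simp
    show "(\<lambda>w. N w * Q' (x - s * w)) \<in> borel_measurable lborel" using bc_meas[OF Q'] .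
    fix w
    have "((\<lambda>h. (Q ((x - s * w) + h) - Q (x - s * w)) / h) \<longlongrightarrow> Q' (x - s * w)) (at 0)"
      using d[of "x - s * w"] unfolding DERIV_def .
    then have "((\<lambda>h. (Q (x + h - s * w) - Q (x - s * w)) / h) \<longlongrightarrow> Q' (x - s * w)) (at 0)"
      by (simp add: algebra_simps)
    then show "((\<lambda>h. N w * ((Q (x + h - s * w) - Q (x - s * w)) / h)) \<longlongrightarrow> N w * Q' (x - s * w)) (at 0 within UNIV)"
      by (intro tendsto_mult_left) simp
    fix h
    have "\<bar>(Q (x + h - s * w) - Q (x - s * w)) / h\<bar> \<le> B' * \<bar>((x + h - s * w) - (x - s * w)) / h\<bar>"
      by (rule quot_bound[OF d Q'])
    also have "\<dots> \<le> B'"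
      using bc_nonneg[OF Q'] by (cases "h = 0") auto
    finally have "N w * \<bar>(Q (x + h - s * w) - Q (x - s * w)) / h\<bar> \<le> N w * B'"
      using N_nonneg by (intro mult_left_mono) auto
    then show "\<bar>N w * ((Q (x + h - s * w) - Q (x - s * w)) / h)\<bar> \<le> B' * N w"
      using N_nonneg by (simp add: abs_mult mult.commute)
  qed
  then show "((\<lambda>h. (Avg Q (x + h) s - Avg Q x s) / h) \<longlongrightarrow> Avg Q' x s) (at 0)"
    by (simp add: Avg_diff_quot[OF Q])
qed

lemma Avg_deriv_s:
  assumes Q: "bc Q B" and d: "\<And>y. (Q has_real_derivative Q' y) (at y)" and Q': "bc Q' B'"
  shows "((\<lambda>s. Avg Q x s) has_real_derivative (\<integral>w. N w * (Q' (x - s * w) * (- w)) \<partial>lborel)) (at s)"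
  unfolding DERIV_def
proof -
  have "((\<lambda>h. \<integral>w. N w * ((Q (x - (s + h) * w) - Q (x - s * w)) / h) \<partial>lborel) \<longlongrightarrow>
       (\<integral>w. N w * (Q' (x - s * w) * (- w)) \<partial>lborel)) (at 0 within UNIV)"
  proof (rule DCT_at[where W="\<lambda>w. B' * (N w * \<bar>w\<bar>)"])
    show "\<And>p. (\<lambda>w. N w * ((Q (x - (s + p) * w) - Q (x - s * w)) / p)) \<in> borel_measurable lborel"
      using quot_meas[OF Q] .
    show "integrable lborel (\<lambda>w. B' * (N w * \<bar>w\<bar>))" using N_abs_int by simp
    have "(\<lambda>w. N w * Q' (x - s * w) * (- w)) \<in> borel_measurable lborel"
      using bc_meas[OF Q'] by measurable
    then show "(\<lambda>w. N w * (Q' (x - s * w) * (- w))) \<in> borel_measurable lborel"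
      by (simp add: mult.assoc)
    fix w
    have "((\<lambda>s. Q (x - s * w)) has_real_derivative Q' (x - s * w) * (- w)) (at s)"
      by (rule DERIV_chain2[OF d]) (auto intro!: derivative_eq_intros)
    then have "((\<lambda>h. (Q (x - (s + h) * w) - Q (x - s * w)) / h) \<longlongrightarrow> Q' (x - s * w) * (- w)) (at 0)"
      unfolding DERIV_def .
    then show "((\<lambda>h. N w * ((Q (x - (s + h) * w) - Q (x - s * w)) / h)) \<longlongrightarrow> N w * (Q' (x - s * w) * (- w))) (at 0 within UNIV)"
      by (intro tendsto_mult_left) simp
    fix h
    have "\<bar>(Q (x - (s + h) * w) - Q (x - s * w)) / h\<bar> \<le> B' * \<bar>((x - (s + h) * w) - (x - s * w)) / h\<bar>"
      by (rule quot_bound[OF d Q'])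
    also have "\<dots> \<le> B' * \<bar>w\<bar>"
      using bc_nonneg[OF Q'] by (cases "h = 0") (auto simp: algebra_simps abs_mult)
    finally have "N w * \<bar>(Q (x - (s + h) * w) - Q (x - s * w)) / h\<bar> \<le> N w * (B' * \<bar>w\<bar>)"
      using N_nonneg by (intro mult_left_mono) auto
    then show "\<bar>N w * ((Q (x - (s + h) * w) - Q (x - s * w)) / h)\<bar> \<le> B' * (N w * \<bar>w\<bar>)"
      using N_nonneg by (simp add: abs_mult mult.commute mult.left_commute)
  qed
  then show "((\<lambda>h. (Avg Q x (s + h) - Avg Q x s) / h) \<longlongrightarrow> (\<integral>w. N w * (Q' (x - s * w) * (- w)) \<partial>lborel)) (at 0)"
    by (simp add: Avg_diff_quot[OF Q])
qed

lemma integral_deriv_zero: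
  fixes F f :: "real \<Rightarrow> real"
  assumes d: "\<And>w. (F has_real_derivative f w) (at w)" and c: "continuous_on UNIV f"
    and i: "integrable lborel f" and t: "(F \<longlongrightarrow> 0) at_top" and b: "(F \<longlongrightarrow> 0) at_bot"
  shows "(\<integral>w. f w \<partial>lborel) = 0"
proof -
  have eq: "(\<integral>w. f w * indicator {- real n..real n} w \<partial>lborel) = F (real n) - F (- real n)" for n
    by (rule integral_FTC_Icc_real) (use d c in \<open>auto simp: continuous_on_eq_continuous_at\<close>)
  have l1: "(\<lambda>n. \<integral>w. f w * indicator {- real n..real n} w \<partial>lborel) \<longlonglongrightarrow> (\<integral>w. f w \<partial>lborel)"
  proof (rule integral_dominated_convergence[where w="\<lambda>w. \<bar>f w\<bar>"])
    show "f \<in> borel_measurable lborel" using i by auto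
    show "\<And>n. (\<lambda>w. f w * indicator {- real n..real n} w) \<in> borel_measurable lborel"
      using i by auto
    show "integrable lborel (\<lambda>w. \<bar>f w\<bar>)" using i by auto
    show "AE w in lborel. (\<lambda>n. f w * indicator {- real n..real n} w) \<longlonglongrightarrow> f w"
    proof (rule AE_I2, rule tendsto_eventually)
      fix w :: real
      show "\<forall>\<^sub>F n in sequentially. f w * indicator {- real n..real n} w = f w"
        unfolding eventually_sequentially
      proof (rule exI[of _ "nat \<lceil>\<bar>w\<bar>\<rceil>"], intro allI impI)
        fix n assume "nat \<lceil>\<bar>w\<bar>\<rceil> \<le> n"
        then have "\<lceil>\<bar>w\<bar>\<rceil> \<le> int n" by linarith
        then have "\<bar>w\<bar> \<le> real n" by (simp add: ceiling_le_iff)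
        then show "f w * indicator {- real n..real n} w = f w" by (auto simp: indicator_def)
      qed
    qed
    show "\<And>n. AE w in lborel. norm (f w * indicator {- real n..real n} w) \<le> \<bar>f w\<bar>"
      by (auto simp: indicator_def)
  qed
  have l2: "(\<lambda>n. F (real n) - F (- real n)) \<longlonglongrightarrow> 0 - 0"
  proof (rule tendsto_diff)
    show "(\<lambda>n. F (real n)) \<longlonglongrightarrow> 0"
      by (rule filterlim_compose[OF t filterlim_real_sequentially])
    have "filterlim (\<lambda>n. - real n) at_bot sequentially"
      using filterlim_uminus_at_top filterlim_real_sequentially by blast
    then show "(\<lambda>n. F (- real n)) \<longlonglongrightarrow> 0"
      by (rule filterlim_compose[OF b])
  qed
  show ?thesis using LIMSEQ_unique[OF l1] l2 eq by simp
qed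

lemma Avg_heat_ibp:
  assumes Q': "bc Q' B'" and d2: "\<And>y. (Q' has_real_derivative Q'' y) (at y)" and Q'': "bc Q'' B''"
  shows "(\<integral>w. N w * (Q' (x - s * w) * (- w)) \<partial>lborel) = s * Avg Q'' x s"
proof -
  define F where "F w = N w * Q' (x - s * w)" for w
  define f where "f w = (- w * N w) * Q' (x - s * w) + (Q'' (x - s * w) * (- s)) * N w" for w
  have cQ': "continuous_on UNIV Q'" and cQ'': "continuous_on UNIV Q''"
    using Q' Q'' unfolding bc_def by auto
  have dF: "(F has_real_derivative f w) (at w)" for w
  proof -
    have "((\<lambda>w. Q' (x - s * w)) has_real_derivative Q'' (x - s * w) * (- s)) (at w)"
      by (rule DERIV_chain2[OF d2]) (auto intro!: derivative_eq_intros)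
    from DERIV_mult[OF N_deriv this] show ?thesis unfolding F_def f_def .
  qed
  have c1: "continuous_on UNIV (\<lambda>w. Q' (x - s * w))"
    by (rule continuous_on_compose2[OF cQ']) (auto intro: continuous_intros)
  have c2: "continuous_on UNIV (\<lambda>w. Q'' (x - s * w))"
    by (rule continuous_on_compose2[OF cQ'']) (auto intro: continuous_intros)
  have cf: "continuous_on UNIV f"
    unfolding f_def by (intro continuous_intros c1 c2 N_cont)
  have i1: "integrable lborel (\<lambda>w. (- w * N w) * Q' (x - s * w))"
  proof (rule Bochner_Integration.integrable_bound[where f="\<lambda>w. B' * (N w * \<bar>w\<bar>)"])
    show "integrable lborel (\<lambda>w. B' * (N w * \<bar>w\<bar>))" using N_abs_int by simp
    show "(\<lambda>w. (- w * N w) * Q' (x - s * w)) \<in> borel_measurable lborel"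
    proof -
      have "continuous_on UNIV (\<lambda>w. (- w * N w) * Q' (x - s * w))"
        by (intro continuous_intros c1 N_cont)
      from borel_measurable_continuous_onI[OF this] show ?thesis by simp
    qed
    show "AE w in lborel. norm ((- w * N w) * Q' (x - s * w)) \<le> norm (B' * (N w * \<bar>w\<bar>))"
    proof (rule AE_I2)
      fix w
      have "\<bar>Q' (x - s * w)\<bar> \<le> B'" using Q' unfolding bc_def by auto
      then have "(N w * \<bar>w\<bar>) * \<bar>Q' (x - s * w)\<bar> \<le> (N w * \<bar>w\<bar>) * B'"
        using N_nonneg by (intro mult_left_mono) auto
      then show "norm ((- w * N w) * Q' (x - s * w)) \<le> norm (B' * (N w * \<bar>w\<bar>))"
        using N_nonneg bc_nonneg[OF Q'] by (simp add: abs_mult mult.commute mult.left_commute)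
    qed
  qed
  have i2: "integrable lborel (\<lambda>w. N w * Q'' (x - s * w))" using bc_int[OF Q''] .
  have i2': "integrable lborel (\<lambda>w. (Q'' (x - s * w) * (- s)) * N w)"
    using integrable_mult_right[OF i2, of "- s"] by (simp add: algebra_simps)
  have fi: "integrable lborel f" unfolding f_def using i1 i2' by simp
  have Flim: "(F \<longlongrightarrow> 0) G" if G: "(N \<longlongrightarrow> 0) G" for G
  proof (rule Lim_null_comparison[where g="\<lambda>w. B' * N w"])
    show "\<forall>\<^sub>F w in G. norm (F w) \<le> B' * N w"
    proof (rule always_eventually, rule allI)
      fix w
      have "\<bar>Q' (x - s * w)\<bar> \<le> B'" using Q' unfolding bc_def by auto
      then have "N w * \<bar>Q' (x - s * w)\<bar> \<le> N w * B'" using N_nonneg by (intro mult_left_mono) auto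
      then show "norm (F w) \<le> B' * N w" unfolding F_def using N_nonneg by (simp add: abs_mult mult.commute)
    qed
    show "((\<lambda>w. B' * N w) \<longlongrightarrow> 0) G" using tendsto_mult_left[OF G, of B'] by simp
  qed
  have f0: "(\<integral>w. f w \<partial>lborel) = 0"
    by (rule integral_deriv_zero[OF dF cf fi Flim[OF N_at_top] Flim[OF N_at_bot]])
  have "(\<integral>w. N w * (Q' (x - s * w) * (- w)) \<partial>lborel) = (\<integral>w. f w + s * (N w * Q'' (x - s * w)) \<partial>lborel)"
    by (rule Bochner_Integration.integral_cong) (auto simp: f_def algebra_simps)
  also have "\<dots> = (\<integral>w. f w \<partial>lborel) + s * Avg Q'' x s"
    unfolding Avg_def using fi i2 by simp
  finally show ?thesis using f0 by simp
qed

locale heatdata =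
  fixes E :: "nat \<Rightarrow> real \<Rightarrow> real" and B :: "nat \<Rightarrow> real"
  assumes Ed: "\<And>k y. k < 3 \<Longrightarrow> (E k has_real_derivative E (Suc k) y) (at y)"
    and Ebc: "\<And>k. k \<le> 3 \<Longrightarrow> bc (E k) (B k)"
begin

definition U :: "nat \<Rightarrow> real \<Rightarrow> real \<Rightarrow> real" where
  "U k x t = Avg (E k) x (sqrt (2 * t))"

lemma U_bound: "k \<le> 3 \<Longrightarrow> \<bar>U k x t\<bar> \<le> B k"
  unfolding U_def using Avg_bound Ebc by blast

lemma U_zero: "U k x 0 = E k x"
  unfolding U_def by (simp add: Avg_zero)

lemma U_dx: "k < 3 \<Longrightarrow> ((\<lambda>x. U k x t) has_real_derivative U (Suc k) x t) (at x)"
  unfolding U_def by (rule Avg_deriv_x[OF Ebc Ed Ebc]) auto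

lemma U_dt: assumes "t > 0" shows "((\<lambda>t. U 0 x t) has_real_derivative U 2 x t) (at t)"
proof -
  define s where "s = sqrt (2 * t)"
  have s: "s > 0" using assms unfolding s_def by simp
  have b0: "bc (E 0) (B 0)" and b1: "bc (E 1) (B 1)" and b2: "bc (E 2) (B 2)" using Ebc by auto
  have e0: "\<And>y. (E 0 has_real_derivative E 1 y) (at y)" and e1: "\<And>y. (E 1 has_real_derivative E 2 y) (at y)"
    using Ed[of 0] Ed[of 1] by (auto simp: numeral_2_eq_2)
  have d1: "((\<lambda>s. Avg (E 0) x s) has_real_derivative (\<integral>w. N w * (E 1 (x - s * w) * (- w)) \<partial>lborel)) (at s)"
    using Avg_deriv_s[OF b0 e0 b1] .
  have "(\<integral>w. N w * (E 1 (x - s * w) * (- w)) \<partial>lborel) = s * Avg (E 2) x s"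
    using Avg_heat_ibp[OF b1 e1 b2] .
  with d1 have d1': "((\<lambda>s. Avg (E 0) x s) has_real_derivative s * Avg (E 2) x s) (at s)" by simp
  have d2: "((\<lambda>t. sqrt (2 * t)) has_real_derivative 1 / s) (at t)"
    using assms unfolding s_def
    by (auto intro!: derivative_eq_intros simp: field_simps real_sqrt_mult)
  have "((\<lambda>t. Avg (E 0) x (sqrt (2 * t))) has_real_derivative (s * Avg (E 2) x s) * (1 / s)) (at t)"
    using DERIV_chain2[OF d1'[unfolded s_def] d2[unfolded s_def]] unfolding s_def by simp
  then show ?thesis using s unfolding U_def s_def by simp
qed

lemma U_cont: "k \<le> 3 \<Longrightarrow> continuous_on (UNIV \<times> {0..}) (\<lambda>(x, t). U k x t)"
proof -
  assume k: "k \<le> 3"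
  have c: "continuous_on UNIV (\<lambda>p. Avg (E k) (fst p) (snd p))" using Avg_cont[OF Ebc[OF k]] .
  have "continuous_on (UNIV \<times> {0..}) (\<lambda>p::real\<times>real. (fst p, sqrt (2 * snd p)))"
    by (intro continuous_intros)
  then have "continuous_on (UNIV \<times> {0..}) ((\<lambda>p. Avg (E k) (fst p) (snd p)) \<circ> (\<lambda>p::real\<times>real. (fst p, sqrt (2 * snd p))))"
    by (rule continuous_on_compose) (rule continuous_on_subset[OF c], simp)
  then show ?thesis unfolding U_def comp_def by (simp add: case_prod_beta)
qed

end

lemma max_principle:
  fixes W Wx Wxx :: "real \<Rightarrow> real \<Rightarrow> real" and T1 :: real
  assumes T1: "T1 > 0"
    and cont: "continuous_on ({0..1} \<times> {0..T1}) (\<lambda>(x, t). W x t)"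
    and init: "\<And>x. x \<in> {0..1} \<Longrightarrow> W x 0 \<le> 0"
    and bdry: "\<And>t. t \<in> {0..T1} \<Longrightarrow> W 0 t \<le> 0 \<and> W 1 t \<le> 0"
    and dx: "\<And>x t. x \<in> {0<..<1} \<Longrightarrow> t \<in> {0<..T1} \<Longrightarrow> ((\<lambda>y. W y t) has_real_derivative Wx x t) (at x)"
    and dxx: "\<And>x t. x \<in> {0<..<1} \<Longrightarrow> t \<in> {0<..T1} \<Longrightarrow> ((\<lambda>y. Wx y t) has_real_derivative Wxx x t) (at x)"
    and dt: "\<And>x t. x \<in> {0<..<1} \<Longrightarrow> t \<in> {0<..T1} \<Longrightarrow> ((\<lambda>s. W x s) has_real_derivative Wxx x t) (at t)"
    and x1: "x1 \<in> {0..1}" and t1: "t1 \<in> {0..T1}"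
  shows "W x1 t1 \<le> 0"
proof (rule ccontr)
  assume "\<not> W x1 t1 \<le> 0"
  then have pos: "W x1 t1 > 0" by simp
  define \<delta> where "\<delta> = W x1 t1 / (2 * (T1 + 1))"
  have \<delta>: "\<delta> > 0" using pos T1 unfolding \<delta>_def by simp
  define S where "S = {0..1::real} \<times> {0..T1}"
  define Z where "Z = (\<lambda>p::real\<times>real. W (fst p) (snd p) - \<delta> * snd p)"
  have cZ: "continuous_on S Z"
  proof -
    have "continuous_on S (\<lambda>p. W (fst p) (snd p))"
      using cont unfolding S_def by (simp add: case_prod_beta)
    then show ?thesis unfolding Z_def by (intro continuous_intros)
  qed
  have "compact S" unfolding S_def by (intro compact_Times compact_Icc)
  moreover have "S \<noteq> {}" using x1 t1 unfolding S_def by auto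
  ultimately obtain p0 where p0S: "p0 \<in> S" and pmax: "\<And>p. p \<in> S \<Longrightarrow> Z p \<le> Z p0"
    using continuous_attains_sup[OF _ _ cZ] by blast
  obtain x0 t0 where p0: "p0 = (x0, t0)" by (cases p0)
  have x0: "x0 \<in> {0..1}" and t0: "t0 \<in> {0..T1}" using p0S p0 unfolding S_def by auto
  have "Z (x1, t1) \<le> Z p0" using pmax x1 t1 unfolding S_def by auto
  moreover have "\<delta> * t1 \<le> W x1 t1 / 2"
  proof -
    have "\<delta> * t1 \<le> \<delta> * (T1 + 1)" using \<delta> t1 by (intro mult_left_mono) auto
    also have "\<dots> = W x1 t1 / 2" unfolding \<delta>_def using T1 by (simp add: field_simps)
    finally show ?thesis .
  qed
  ultimately have Zpos: "Z (x0, t0) > 0" using pos unfolding Z_def p0 by simp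
  have Zle: "\<And>x t. x \<in> {0..1} \<Longrightarrow> t \<in> {0..T1} \<Longrightarrow> W x t - \<delta> * t \<le> W x0 t0 - \<delta> * t0"
    using pmax unfolding S_def Z_def p0 by fastforce
  have "t0 \<noteq> 0" using Zpos init[OF x0] unfolding Z_def by auto
  then have t0': "t0 \<in> {0<..T1}" using t0 by auto
  have "x0 \<noteq> 0" "x0 \<noteq> 1" using Zpos bdry[OF t0] \<delta> t0 unfolding Z_def
    by (auto simp: mult_nonneg_nonneg) (smt (verit) mult_nonneg_nonneg)+
  then have x0': "x0 \<in> {0<..<1}" using x0 by auto
  have tder: "Wxx x0 t0 \<ge> \<delta>"
  proof (rule ccontr)
    assume "\<not> \<delta> \<le> Wxx x0 t0"
    then have neg: "Wxx x0 t0 - \<delta> < 0" by simp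
    have "((\<lambda>s. W x0 s - \<delta> * s) has_real_derivative Wxx x0 t0 - \<delta>) (at t0)"
      using dt[OF x0' t0'] by (auto intro!: derivative_eq_intros)
    from DERIV_neg_dec_left[OF this neg] obtain d where d: "d > 0"
      and dd: "\<And>h. h > 0 \<Longrightarrow> h < d \<Longrightarrow> W x0 t0 - \<delta> * t0 < W x0 (t0 - h) - \<delta> * (t0 - h)" by blast
    define h where "h = min (d / 2) (t0 / 2)"
    have h: "h > 0" "h < d" using d t0' unfolding h_def by auto
    have "t0 - h \<in> {0..T1}" using t0' h unfolding h_def by auto
    from Zle[OF x0 this] dd[OF h] show False by simp
  qed
  let ?f = "\<lambda>y. W y t0 - \<delta> * t0"
  have fder: "\<And>y. y \<in> {0<..<1} \<Longrightarrow> (?f has_real_derivative Wx y t0) (at y)"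
    using dx[OF _ t0'] by (auto intro!: derivative_eq_intros)
  have "Wx x0 t0 = 0"
  proof (rule DERIV_local_max[OF fder[OF x0']])
    show "0 < min x0 (1 - x0)" using x0' by auto
    show "\<forall>y. \<bar>x0 - y\<bar> < min x0 (1 - x0) \<longrightarrow> ?f y \<le> ?f x0"
    proof (intro allI impI)
      fix y assume "\<bar>x0 - y\<bar> < min x0 (1 - x0)"
      then have "y \<in> {0..1}" by auto
      from Zle[OF this t0] show "?f y \<le> ?f x0" .
    qed
  qed
  moreover have "Wxx x0 t0 > 0" using tder \<delta> by simp
  ultimately obtain d where d: "d > 0" and dd: "\<And>h. h > 0 \<Longrightarrow> h < d \<Longrightarrow> 0 < Wx (x0 + h) t0"
    using DERIV_pos_inc_right[OF dxx[OF x0' t0']] by force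
  define h where "h = min (d / 2) ((1 - x0) / 2)"
  have h: "h > 0" "h < d" "x0 + h < 1" using d x0' unfolding h_def by (auto simp: min_def field_simps)
  obtain z where z: "x0 < z" "z < x0 + h" and eq: "?f (x0 + h) - ?f x0 = (x0 + h - x0) * Wx z t0"
    using MVT2[of x0 "x0 + h" ?f "\<lambda>y. Wx y t0"] fder h x0' by fastforce
  have "0 < Wx z t0" using dd[of "z - x0"] z h by simp
  then have "h * Wx z t0 > 0" using h by simp
  then have "?f (x0 + h) > ?f x0" using eq by simp
  moreover have "?f (x0 + h) \<le> ?f x0" using Zle[of "x0 + h" t0] h x0' t0 by auto
  ultimately show False by simp
qed

definition Ek :: "(real \<Rightarrow> real) \<Rightarrow> nat \<Rightarrow> real \<Rightarrow> real" where
  "Ek f k x = (let y = x - 2 * of_int \<lfloor>x / 2\<rfloor> in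
      if y \<le> 1 then (deriv ^^ k) f y else (-1) ^ Suc k * (deriv ^^ k) f (2 - y))"

definition Hk :: "(real \<Rightarrow> real) \<Rightarrow> nat \<Rightarrow> int \<Rightarrow> real \<Rightarrow> real" where
  "Hk f k j x = (deriv ^^ k) f (x - 2 * of_int j) + (-1) ^ Suc k * (deriv ^^ k) f (2 * of_int j + 2 - x)"

locale smooth0 =
  fixes f :: "real \<Rightarrow> real" and a b :: real
  assumes a: "0 < a" and ab: "a \<le> b" and b: "b < 1"
    and fz: "\<And>x. x \<notin> {a..b} \<Longrightarrow> f x = 0"
    and fd: "\<And>n x. ((deriv ^^ n) f) differentiable (at x)"
begin

lemma Dd: "((deriv ^^ k) f has_real_derivative (deriv ^^ (Suc k)) f x) (at x)"
  using fd[of k x] DERIV_deriv_iff_real_differentiable by simp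

lemma Dcont: "continuous_on UNIV ((deriv ^^ k) f)"
  using Dd by (meson DERIV_isCont continuous_at_imp_continuous_on)

lemma Dz: "x < a \<or> x > b \<Longrightarrow> (deriv ^^ k) f x = 0"
proof (induction k arbitrary: x)
  case 0 then show ?case using fz by auto
next
  case (Suc k)
  define S where "S = {..<a} \<union> {b<..}"
  have S: "open S" "x \<in> S" using Suc.prems unfolding S_def by auto
  have "((\<lambda>_. 0) has_real_derivative 0) (at x)" by simp
  then have "((deriv ^^ k) f has_real_derivative 0) (at x)"
    by (rule has_field_derivative_transform_within_open[OF _ S]) (use Suc.IH in \<open>auto simp: S_def\<close>)
  with Dd[of k x] show ?case using DERIV_unique by blast
qed

lemma Dz0: "x \<le> 0 \<Longrightarrow> (deriv ^^ k) f x = 0" using Dz a by auto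
lemma Dz1: "x \<ge> 1 \<Longrightarrow> (deriv ^^ k) f x = 0" using Dz b by auto

lemma E_eq_H:
  assumes x: "2 * of_int j - a < x" "x < 2 * of_int j + 2 + a"
  shows "Ek f k x = Hk f k j x"
proof -
  consider "x < 2 * of_int j" | "2 * of_int j \<le> x \<and> x < 2 * of_int j + 2" | "2 * of_int j + 2 \<le> x"
    by linarith
  then show ?thesis
  proof cases
    case 1
    then have fl: "\<lfloor>x / 2\<rfloor> = j - 1" using x a ab b by (subst floor_eq_iff) auto
    show ?thesis unfolding Ek_def Hk_def Let_def fl using 1 x a b
      by (auto simp: Dz0 Dz1 Dz)
  next
    case 2
    then have fl: "\<lfloor>x / 2\<rfloor> = j" by (subst floor_eq_iff) auto
    have e: "2 - (x - 2 * real_of_int j) = 2 * real_of_int j + 2 - x" by simp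
    show ?thesis unfolding Ek_def Hk_def Let_def fl e using 2 by (auto simp: Dz0 Dz1)
  next
    case 3
    then have fl: "\<lfloor>x / 2\<rfloor> = j + 1" using x a ab b by (subst floor_eq_iff) auto
    show ?thesis unfolding Ek_def Hk_def Let_def fl using 3 x a b
      by (auto simp: Dz0 Dz1 Dz)
  qed
qed

lemma Hd: "(Hk f k j has_real_derivative Hk f (Suc k) j x) (at x)"
proof -
  have d1: "((\<lambda>x. (deriv ^^ k) f (x - 2 * of_int j)) has_real_derivative (deriv ^^ Suc k) f (x - 2 * of_int j) * 1) (at x)"
    by (rule DERIV_chain2[OF Dd]) (auto intro!: derivative_eq_intros)
  have d2: "((\<lambda>x. (deriv ^^ k) f (2 * of_int j + 2 - x)) has_real_derivative (deriv ^^ Suc k) f (2 * of_int j + 2 - x) * (- 1)) (at x)"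
    by (rule DERIV_chain2[OF Dd]) (auto intro!: derivative_eq_intros)
  have "(Hk f k j has_real_derivative (deriv ^^ Suc k) f (x - 2 * of_int j) * 1
      + (-1) ^ Suc k * ((deriv ^^ Suc k) f (2 * of_int j + 2 - x) * (- 1))) (at x)"
    unfolding Hk_def by (intro DERIV_add d1 DERIV_cmult d2)
  then show ?thesis unfolding Hk_def by simp
qed

lemma E_in_int: "2 * of_int \<lfloor>x / 2\<rfloor> - a < x" "x < 2 * of_int \<lfloor>x / 2\<rfloor> + 2 + a"
proof -
  have "2 * of_int \<lfloor>x / 2\<rfloor> \<le> x" "x < 2 * of_int \<lfloor>x / 2\<rfloor> + 2"
    using floor_le_iff[of "x/2"] le_floor_iff[of _ "x/2"] by linarith+
  then show "2 * of_int \<lfloor>x / 2\<rfloor> - a < x" "x < 2 * of_int \<lfloor>x / 2\<rfloor> + 2 + a" using a by auto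
qed

lemma Ed: "(Ek f k has_real_derivative Ek f (Suc k) x) (at x)"
proof -
  define j where "j = \<lfloor>x / 2\<rfloor>"
  define S where "S = {2 * of_int j - a <..< 2 * of_int j + 2 + a}"
  have S: "open S" "x \<in> S" using E_in_int[of x] unfolding S_def j_def by auto
  have "(Hk f k j has_real_derivative Hk f (Suc k) j x) (at x)" by (rule Hd)
  then have "(Ek f k has_real_derivative Hk f (Suc k) j x) (at x)"
    by (rule has_field_derivative_transform_within_open[OF _ S]) (auto simp: S_def E_eq_H)
  moreover have "Ek f (Suc k) x = Hk f (Suc k) j x" using S E_eq_H unfolding S_def by auto
  ultimately show ?thesis by simp
qed

lemma Econt: "continuous_on UNIV (Ek f k)"
  using Ed by (meson DERIV_isCont continuous_at_imp_continuous_on)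

lemma E_range: "\<exists>z\<in>{0..1}. \<bar>Ek f k x\<bar> = \<bar>(deriv ^^ k) f z\<bar>"
proof -
  define y where "y = x - 2 * of_int \<lfloor>x / 2\<rfloor>"
  have y: "0 \<le> y" "y < 2" using E_in_int(1)[of x] floor_le_iff[of "x/2"] le_floor_iff[of _ "x/2"]
    unfolding y_def by linarith+
  show ?thesis
  proof (cases "y \<le> 1")
    case True then show ?thesis using y unfolding Ek_def Let_def y_def[symmetric] by auto
  next
    case False then show ?thesis using y unfolding Ek_def Let_def y_def[symmetric]
      by (intro bexI[of _ "2 - y"]) (auto simp: abs_mult)
  qed
qed

lemma E_per: "Ek f k (x + 2) = Ek f k x"
proof -
  have "\<lfloor>(x + 2) / 2\<rfloor> = \<lfloor>x / 2\<rfloor> + 1"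
    by (simp add: add_divide_distrib)
  then show ?thesis unfolding Ek_def Let_def by (simp add: algebra_simps)
qed

lemma E_per_int: "Ek f k (x + 2 * of_int m) = Ek f k x"
proof -
  have "\<lfloor>(x + 2 * of_int m) / 2\<rfloor> = \<lfloor>x / 2\<rfloor> + m"
    by (simp add: add_divide_distrib)
  then show ?thesis unfolding Ek_def Let_def by (simp add: algebra_simps)
qed

lemma E_refl: "Ek f 0 (2 - x) = - Ek f 0 x"
proof -
  define j where "j = \<lfloor>x / 2\<rfloor>"
  have e1: "Ek f 0 x = Hk f 0 j x" using E_in_int[of x] unfolding j_def by (intro E_eq_H) auto
  have e2: "Ek f 0 (2 - x) = Hk f 0 (- j) (2 - x)" using E_in_int[of x] unfolding j_def by (intro E_eq_H) auto
  show ?thesis unfolding e1 e2 Hk_def by (simp add: algebra_simps)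
qed

lemma E_init: "x \<in> {0..1} \<Longrightarrow> Ek f 0 x = f x"
proof -
  assume x: "x \<in> {0..1}"
  then have "\<lfloor>x / 2\<rfloor> = 0" by (subst floor_eq_iff) auto
  then show ?thesis using x unfolding Ek_def Let_def by auto
qed

end

lemma I_sets: "I_int \<in> sets lebesgue" unfolding I_int_def by simp

lemma I_space: "space (lebesgue_on I_int) = I_int"
  using I_sets by simp

lemma emeasure_lebesgue_Ioo: "l \<le> u \<Longrightarrow> emeasure lebesgue {l<..<u::real} = ennreal (u - l)"
  by simp

lemma I_measure_pos: "emeasure (lebesgue_on I_int) (space (lebesgue_on I_int)) \<noteq> 0"
proof -
  have "emeasure (lebesgue_on I_int) I_int = emeasure lebesgue I_int"
    using I_sets by (intro emeasure_restrict_space) auto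
  also have "\<dots> = 1" unfolding I_int_def by simp
  finally show ?thesis using I_space by simp
qed

lemma Linf_nonneg: "0 \<le> Linf_I u"
proof -
  have "esssup (lebesgue_on I_int) (\<lambda>x. 0::ereal) \<le> esssup (lebesgue_on I_int) (\<lambda>x. ereal \<bar>u x\<bar>)"
    by (rule esssup_mono) auto
  moreover have "esssup (lebesgue_on I_int) (\<lambda>x. 0::ereal) = 0"
    using esssup_const[OF I_measure_pos] .
  ultimately show ?thesis unfolding Linf_I_def by (simp add: real_of_ereal_pos)
qed

lemma Linf_ge:
  fixes u :: "real \<Rightarrow> real"
  assumes cu: "continuous_on UNIV u" and C: "\<And>x. \<bar>u x\<bar> \<le> C" and y: "y \<in> {0<..<1}"
  shows "\<bar>u y\<bar> \<le> Linf_I u"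
proof -
  let ?M = "lebesgue_on I_int"
  let ?e = "esssup ?M (\<lambda>x. ereal \<bar>u x\<bar>)"
  have "(\<lambda>x. ereal \<bar>u x\<bar>) \<in> borel_measurable borel"
    using borel_measurable_continuous_onI[OF cu] by measurable
  then have meas: "(\<lambda>x. ereal \<bar>u x\<bar>) \<in> borel_measurable ?M"
    by (intro measurable_restrict_space1) (simp add: measurable_completion)
  have eC: "?e \<le> ereal C"
    by (rule esssup_I[OF meas]) (auto simp: C)
  have e0: "0 \<le> ?e"
  proof -
    have "esssup ?M (\<lambda>x. 0::ereal) \<le> ?e" by (rule esssup_mono) auto
    then show ?thesis using esssup_const[OF I_measure_pos, of "0::ereal"] by simp
  qed
  have ge: "ereal \<bar>u y\<bar> \<le> ?e"
  proof (rule ccontr)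
    assume "\<not> ereal \<bar>u y\<bar> \<le> ?e"
    then have lt: "?e < ereal \<bar>u y\<bar>" by simp
    obtain r where r: "?e = ereal r" using e0 eC by (cases ?e) auto
    define A where "A = {x. r < \<bar>u x\<bar>} \<inter> {0<..<1::real}"
    have "open {x. r < \<bar>u x\<bar>}"
      by (rule open_Collect_less) (auto intro!: continuous_intros cu)
    then have oA: "open A" unfolding A_def by auto
    have yA: "y \<in> A" using lt r y unfolding A_def by auto
    obtain d where d: "d > 0" "ball y d \<subseteq> A" using openE[OF oA yA] by blast
    have bI: "ball y d = {y - d<..<y + d}" by (auto simp: dist_real_def abs_less_iff)
    have "0 < emeasure lebesgue (ball y d)" unfolding bI using d by simp
    also have "\<dots> \<le> emeasure lebesgue A" using d oA by (intro emeasure_mono) auto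
    also have "\<dots> = emeasure ?M A"
      using I_sets by (intro emeasure_restrict_space[symmetric]) (auto simp: A_def I_int_def)
    also have "A = {x \<in> I_int. ereal r < ereal \<bar>u x\<bar>}"
      unfolding A_def I_int_def by auto
    also have "\<dots> = {x \<in> space ?M. ?e < ereal \<bar>u x\<bar>}"
      unfolding I_space r ..
    also have "emeasure ?M \<dots> = 0" by (rule esssup_zero_measure)
    finally show False by simp
  qed
  have "?e \<noteq> \<infinity>" using eC by auto
  then have "real_of_ereal (ereal \<bar>u y\<bar>) \<le> real_of_ereal ?e"
    using ge by (intro real_of_ereal_positive_mono) auto
  then show ?thesis unfolding Linf_I_def by simp
qed

lemma bounded_cont_supp:
  fixes u :: "real \<Rightarrow> real"
  assumes "continuous_on UNIV u" and "\<And>x. x \<notin> {a..b} \<Longrightarrow> u x = 0"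
  shows "\<exists>C. \<forall>x. \<bar>u x\<bar> \<le> C"
proof -
  have "compact (u ` {a..b})" by (rule compact_continuous_image[OF continuous_on_subset[OF assms(1)]]) (auto simp: compact_Icc)
  then obtain C where C: "\<And>y. y \<in> u ` {a..b} \<Longrightarrow> norm y \<le> C"
    using compact_imp_bounded bounded_iff by metis
  show ?thesis
  proof (rule exI[of _ "max C 0"], rule allI)
    fix x show "\<bar>u x\<bar> \<le> max C 0" using C[of "u x"] assms(2)[of x] by (cases "x \<in> {a..b}") auto
  qed
qed

definition Bf :: "(real \<Rightarrow> real) \<Rightarrow> nat \<Rightarrow> real" where
  "Bf f k = (if k = 2 then sqrt (Linf_I (\<lambda>x. ((deriv ^^ 2) f x)\<^sup>2)) else Linf_I ((deriv ^^ k) f))"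

context smooth0 begin

lemma D_le_Linf: "z \<in> {0..1} \<Longrightarrow> \<bar>(deriv ^^ k) f z\<bar> \<le> Linf_I ((deriv ^^ k) f)"
proof -
  assume z: "z \<in> {0..1}"
  obtain C where C: "\<And>x. \<bar>(deriv ^^ k) f x\<bar> \<le> C"
    using bounded_cont_supp[OF Dcont, of a b k] Dz by force
  show ?thesis
  proof (cases "z \<in> {0<..<1}")
    case True then show ?thesis using Linf_ge[OF Dcont C] by blast
  next
    case False then have "z = 0 \<or> z = 1" using z by auto
    then have "(deriv ^^ k) f z = 0" using Dz0 Dz1 by auto
    then show ?thesis using Linf_nonneg by simp
  qed
qed

lemma D2_le_Linf: "z \<in> {0..1} \<Longrightarrow> ((deriv ^^ 2) f z)\<^sup>2 \<le> Linf_I (\<lambda>x. ((deriv ^^ 2) f x)\<^sup>2)"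
proof -
  assume z: "z \<in> {0..1}"
  have c: "continuous_on UNIV (\<lambda>x. ((deriv ^^ 2) f x)\<^sup>2)"
    by (intro continuous_intros Dcont[THEN continuous_on_subset]) auto
  obtain C where C: "\<And>x. \<bar>((deriv ^^ 2) f x)\<^sup>2\<bar> \<le> C"
    using bounded_cont_supp[OF c, of a b] Dz by force
  show ?thesis
  proof (cases "z \<in> {0<..<1}")
    case True then show ?thesis using Linf_ge[OF c C] by fastforce
  next
    case False then have "z = 0 \<or> z = 1" using z by auto
    then have "(deriv ^^ 2) f z = 0" using Dz0 Dz1 by auto
    then show ?thesis using Linf_nonneg by simp
  qed
qed

lemma E_bound: "\<bar>Ek f k x\<bar> \<le> Bf f k"
proof -
  obtain z where z: "z \<in> {0..1}" "\<bar>Ek f k x\<bar> = \<bar>(deriv ^^ k) f z\<bar>" using E_range by blast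
  show ?thesis
  proof (cases "k = 2")
    case True
    have "\<bar>(deriv ^^ 2) f z\<bar> \<le> sqrt (Linf_I (\<lambda>x. ((deriv ^^ 2) f x)\<^sup>2))"
      using D2_le_Linf[OF z(1)] by (simp add: real_le_rsqrt)
    then show ?thesis using z True unfolding Bf_def by simp
  next
    case False then show ?thesis using z D_le_Linf unfolding Bf_def by simp
  qed
qed

lemma heat: "heatdata (Ek f) (Bf f)"
proof
  show "\<And>k y. k < 3 \<Longrightarrow> (Ek f k has_real_derivative Ek f (Suc k) y) (at y)" using Ed by blast
  show "\<And>k. k \<le> 3 \<Longrightarrow> bc (Ek f k) (Bf f k)" unfolding bc_def using Econt E_bound by blast
qed

end

locale rhoset = smooth0 \<rho>0 a b for \<rho>0 a b +
  fixes \<rho> :: "real \<Rightarrow> real \<Rightarrow> real"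
  assumes hs: "heat_solution \<rho> \<rho>0"
begin

sublocale H: heatdata "Ek \<rho>0" "Bf \<rho>0" by (rule heat)

lemma U_per: "H.U k (x + 2 * of_int m) t = H.U k x t"
proof -
  have "H.U k (x + 2 * of_int m) t = (\<integral>w. N w * Ek \<rho>0 k ((x - sqrt (2 * t) * w) + 2 * of_int m) \<partial>lborel)"
    unfolding H.U_def Avg_def by (simp add: algebra_simps)
  also have "\<dots> = H.U k x t" unfolding H.U_def Avg_def E_per_int ..
  finally show ?thesis .
qed

lemma N_even: "N (- w) = N w" by (simp add: std_normal_density_def)

lemma U_refl: "H.U 0 (2 - x) t = - H.U 0 x t"
proof -
  let ?s = "sqrt (2 * t)"
  have "H.U 0 (2 - x) t = (\<integral>w. - (N w * Ek \<rho>0 0 (x + ?s * w)) \<partial>lborel)"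
  proof -
    have "\<And>w. Ek \<rho>0 0 (2 - x - ?s * w) = - Ek \<rho>0 0 (x + ?s * w)"
      using E_refl[of "x + sqrt (2 * t) * _"] by (simp add: algebra_simps)
    then show ?thesis unfolding H.U_def Avg_def by simp
  qed
  also have "\<dots> = - (\<integral>w. N w * Ek \<rho>0 0 (x + ?s * w) \<partial>lborel)" by simp
  also have "(\<integral>w. N w * Ek \<rho>0 0 (x + ?s * w) \<partial>lborel) = (\<integral>w. N w * Ek \<rho>0 0 (x - ?s * w) \<partial>lborel)"
    using lborel_integral_real_affine[of "-1" "\<lambda>w. N w * Ek \<rho>0 0 (x - ?s * w)" 0]
    by (simp add: N_even)
  finally show ?thesis unfolding H.U_def Avg_def by simp
qed

lemma U_bdry: "H.U 0 0 t = 0" "H.U 0 1 t = 0"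
proof -
  have "H.U 0 1 t = - H.U 0 1 t" using U_refl[of 1 t] by simp
  then show "H.U 0 1 t = 0" by simp
  have "H.U 0 0 t = - H.U 0 (0 + 2 * of_int 1) t" using U_refl[of 0 t] by simp
  then have "H.U 0 0 t = - H.U 0 0 t" using U_per[of 0 0 1 t] by simp
  then show "H.U 0 0 t = 0" by simp
qed

end

context rhoset begin

lemma hs_cont: "continuous_on ({0..1} \<times> {0..}) (\<lambda>(x,t). \<rho> x t)"
  and hs_init: "\<And>x. x \<in> {0..1} \<Longrightarrow> \<rho> x 0 = \<rho>0 x"
  and hs_bdry: "\<And>t. t > 0 \<Longrightarrow> \<rho> 0 t = 0 \<and> \<rho> 1 t = 0"
  and hs_dx: "\<And>x t y. x \<in> {0<..<1} \<Longrightarrow> t > 0 \<Longrightarrow> y \<in> {0<..<1} \<Longrightarrow> (\<lambda>z. \<rho> z t) differentiable (at y)"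
  and hs_dxx: "\<And>x t. x \<in> {0<..<1} \<Longrightarrow> t > 0 \<Longrightarrow> (\<lambda>y. deriv (\<lambda>z. \<rho> z t) y) differentiable (at x)"
  and hs_dt: "\<And>x t. x \<in> {0<..<1} \<Longrightarrow> t > 0 \<Longrightarrow>
      ((\<lambda>s. \<rho> x s) has_real_derivative deriv (\<lambda>y. deriv (\<lambda>z. \<rho> z t) y) x) (at t)"
  using hs unfolding heat_solution_def by auto

lemma rho0_0: "\<rho>0 0 = 0" and rho0_1: "\<rho>0 1 = 0" using fz a b by auto

lemma rho_eq_U_aux:
  fixes W Wx Wxx :: "real \<Rightarrow> real \<Rightarrow> real" and \<sigma> :: real
  assumes \<sigma>: "\<sigma> = 1 \<or> \<sigma> = -1"
  defines "W \<equiv> \<lambda>x t. \<sigma> * (\<rho> x t - H.U 0 x t)"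
  defines "Wx \<equiv> \<lambda>x t. \<sigma> * (deriv (\<lambda>z. \<rho> z t) x - H.U 1 x t)"
  defines "Wxx \<equiv> \<lambda>x t. \<sigma> * (deriv (\<lambda>y. deriv (\<lambda>z. \<rho> z t) y) x - H.U 2 x t)"
  assumes x: "x \<in> {0..1}" and t: "t \<ge> 0"
  shows "W x t \<le> 0"
proof (rule max_principle[of "t + 1" W Wx Wxx])
  show "0 < t + 1" using t by simp
  show "x \<in> {0..1}" "t \<in> {0..t + 1}" using x t by auto
  have c1: "continuous_on ({0..1} \<times> {0..t + 1}) (\<lambda>(x,t). \<rho> x t)"
    by (rule continuous_on_subset[OF hs_cont]) auto
  have c2: "continuous_on ({0..1} \<times> {0..t + 1}) (\<lambda>(x,t). H.U 0 x t)"
    by (rule continuous_on_subset[OF H.U_cont]) auto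
  have "continuous_on ({0..1} \<times> {0..t + 1}) (\<lambda>p. \<sigma> * ((\<lambda>(x,t). \<rho> x t) p - (\<lambda>(x,t). H.U 0 x t) p))"
    by (intro continuous_intros c1 c2)
  then show "continuous_on ({0..1} \<times> {0..t + 1}) (\<lambda>(x, t). W x t)"
    unfolding W_def by (simp add: case_prod_beta)
  show "\<And>x. x \<in> {0..1} \<Longrightarrow> W x 0 \<le> 0"
    unfolding W_def using hs_init H.U_zero E_init by simp
  show "\<And>s. s \<in> {0..t + 1} \<Longrightarrow> W 0 s \<le> 0 \<and> W 1 s \<le> 0"
  proof -
    fix s :: real assume s: "s \<in> {0..t + 1}"
    have "\<rho> 0 s = 0 \<and> \<rho> 1 s = 0"
    proof (cases "s = 0")
      case True then show ?thesis using hs_init[of 0] hs_init[of 1] rho0_0 rho0_1 by simp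
    next
      case False then show ?thesis using hs_bdry s by simp
    qed
    then show "W 0 s \<le> 0 \<and> W 1 s \<le> 0" unfolding W_def using U_bdry by simp
  qed
  fix y s :: real assume y: "y \<in> {0<..<1}" and s: "s \<in> {0<..t + 1}"
  have s0: "s > 0" using s by simp
  have d1: "((\<lambda>z. \<rho> z s) has_real_derivative deriv (\<lambda>z. \<rho> z s) y) (at y)"
    using hs_dx[OF y s0 y] DERIV_deriv_iff_real_differentiable by blast
  have d2: "((\<lambda>z. H.U 0 z s) has_real_derivative H.U 1 y s) (at y)" using H.U_dx[of 0] by simp
  show "((\<lambda>z. W z s) has_real_derivative Wx y s) (at y)"
    unfolding W_def Wx_def by (intro DERIV_cmult DERIV_diff d1 d2)
  have d3: "((\<lambda>z. deriv (\<lambda>z. \<rho> z s) z) has_real_derivative deriv (\<lambda>y. deriv (\<lambda>z. \<rho> z s) y) y) (at y)"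
    using hs_dxx[OF y s0] DERIV_deriv_iff_real_differentiable by blast
  have d4: "((\<lambda>z. H.U 1 z s) has_real_derivative H.U 2 y s) (at y)"
    using H.U_dx[of 1] by (simp add: numeral_2_eq_2)
  show "((\<lambda>z. Wx z s) has_real_derivative Wxx y s) (at y)"
    unfolding Wx_def Wxx_def by (intro DERIV_cmult DERIV_diff d3 d4)
  have d5: "((\<lambda>r. H.U 0 y r) has_real_derivative H.U 2 y s) (at s)" using H.U_dt[OF s0] .
  show "((\<lambda>r. W y r) has_real_derivative Wxx y s) (at s)"
    unfolding W_def Wxx_def by (intro DERIV_cmult DERIV_diff hs_dt[OF y s0] d5)
qed

lemma rho_eq_U: "x \<in> {0..1} \<Longrightarrow> t \<ge> 0 \<Longrightarrow> \<rho> x t = H.U 0 x t"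
  using rho_eq_U_aux[of 1 x t] rho_eq_U_aux[of "-1" x t] by simp

lemma rhohat_eq: assumes t: "t \<ge> 0" shows "rho_hat \<rho> x t = H.U 0 x t"
proof -
  define y where "y = x - 2 * of_int \<lfloor>x / 2\<rfloor>"
  have y: "0 \<le> y" "y < 2" using floor_le_iff[of "x/2"] le_floor_iff[of _ "x/2"]
    unfolding y_def by linarith+
  have Ux: "H.U 0 x t = H.U 0 y t" using U_per[of 0 y "\<lfloor>x / 2\<rfloor>" t] unfolding y_def by simp
  show ?thesis
  proof (cases "y \<le> 1")
    case True
    then show ?thesis unfolding rho_hat_def Let_def y_def[symmetric] Ux using rho_eq_U y t by simp
  next
    case False
    have "rho_hat \<rho> x t = - \<rho> (2 - y) t" unfolding rho_hat_def Let_def y_def[symmetric] using False by simp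
    also have "\<dots> = - H.U 0 (2 - y) t" using rho_eq_U[of "2 - y" t] y t False by simp
    also have "\<dots> = H.U 0 y t" using U_refl[of y t] by simp
    finally show ?thesis using Ux by simp
  qed
qed

lemma rh_dt: assumes t: "t > 0" shows "deriv (\<lambda>s. rho_hat \<rho> x s) t = H.U 2 x t"
proof (rule DERIV_imp_deriv)
  show "((\<lambda>s. rho_hat \<rho> x s) has_real_derivative H.U 2 x t) (at t)"
    by (rule has_field_derivative_transform_within_open[OF H.U_dt[OF t], of "{0<..}"])
       (use t rhohat_eq in auto)
qed

lemma rh_fun: "t \<ge> 0 \<Longrightarrow> (\<lambda>y. rho_hat \<rho> y t) = (\<lambda>y. H.U 0 y t)"
  using rhohat_eq by auto

lemma rh_dx: assumes t: "t > 0" shows "deriv (\<lambda>y. rho_hat \<rho> y t) x = H.U 1 x t"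
  using rh_fun[of t] t H.U_dx[of 0 t x] by (simp add: DERIV_imp_deriv)

lemma g_eq: assumes t: "t > 0" shows "g_hat \<rho> x t = - (H.U 2 x t * H.U 1 x t)"
  unfolding g_hat_def using rh_dt[OF t] rh_dx[OF t] by simp

definition Gx :: "real \<Rightarrow> real \<Rightarrow> real" where
  "Gx x t = - (H.U 3 x t * H.U 1 x t + H.U 2 x t * H.U 2 x t)"

lemma g_dx: assumes t: "t > 0"
  shows "((\<lambda>y. g_hat \<rho> y t) has_real_derivative Gx x t) (at x)"
proof -
  have f: "(\<lambda>y. g_hat \<rho> y t) = (\<lambda>y. - (H.U 2 y t * H.U 1 y t))" using g_eq[OF t] by auto
  have d2: "((\<lambda>y. H.U 2 y t) has_real_derivative H.U 3 x t) (at x)"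
    using H.U_dx[of 2 t x] by (simp add: numeral_3_eq_3 numeral_2_eq_2)
  have d1: "((\<lambda>y. H.U 1 y t) has_real_derivative H.U 2 x t) (at x)"
    using H.U_dx[of 1 t x] by (simp add: numeral_2_eq_2)
  show ?thesis unfolding f Gx_def by (intro DERIV_minus DERIV_mult d2 d1)
qed

lemma gx_eq: "t > 0 \<Longrightarrow> deriv (\<lambda>y. g_hat \<rho> y t) x = Gx x t"
  using g_dx by (simp add: DERIV_imp_deriv)

end

lemma Q_open: "open (Q_T T)" unfolding Q_T_def by (intro open_Times) auto
lemma Q_sub: "Q_T T \<subseteq> UNIV \<times> {0..<T}" unfolding Q_T_def by auto

lemma Qint:
  fixes f :: "real \<times> real \<Rightarrow> real"
  assumes cf: "continuous_on (UNIV \<times> {0..<T}) f" and K: "compact K" "K \<subseteq> UNIV \<times> {0..<T}"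
    and z: "\<And>p. p \<in> UNIV \<times> {0..<T} \<Longrightarrow> p \<notin> K \<Longrightarrow> f p = 0"
  shows "integrable (lebesgue_on (Q_T T)) f"
    and "integrable (lborel \<Otimes>\<^sub>M lborel) (\<lambda>p. indicator (Q_T T) p * f p)"
    and "integral\<^sup>L (lebesgue_on (Q_T T)) f = (\<integral>p. indicator (Q_T T) p * f p \<partial>(lborel \<Otimes>\<^sub>M lborel))"
proof -
  have "compact (f ` K)" by (rule compact_continuous_image[OF continuous_on_subset[OF cf K(2)] K(1)])
  then obtain C where C: "\<And>y. y \<in> f ` K \<Longrightarrow> norm y \<le> C"
    using compact_imp_bounded bounded_iff by metis
  have CK: "\<And>p. p \<in> K \<Longrightarrow> \<bar>f p\<bar> \<le> max C 0" using C by fastforce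
  have Qb: "Q_T T \<in> sets borel" using Q_open by auto
  have cQ: "continuous_on (Q_T T) f" by (rule continuous_on_subset[OF cf Q_sub])
  have meas: "(\<lambda>p. indicator (Q_T T) p * f p) \<in> borel_measurable borel"
    using borel_measurable_continuous_on_indicator[OF Qb cQ] by simp
  have intl: "integrable lborel (\<lambda>p. indicator (Q_T T) p * f p)"
  proof (rule Bochner_Integration.integrable_bound[where f="\<lambda>p. max C 0 * indicator K p"])
    have "integrable lborel (indicator K :: real \<times> real \<Rightarrow> real)"
      using K(1) by (intro integrable_real_indicator) (auto simp: compact_imp_closed intro: emeasure_compact_finite[simplified])
    then show "integrable lborel (\<lambda>p. max C 0 * indicator K p)" by simp
    show "(\<lambda>p. indicator (Q_T T) p * f p) \<in> borel_measurable lborel" using meas by simp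
    show "AE p in lborel. norm (indicator (Q_T T) p * f p) \<le> norm (max C 0 * indicator K p)"
    proof (rule AE_I2)
      fix p :: "real \<times> real"
      show "norm (indicator (Q_T T) p * f p) \<le> norm (max C 0 * indicator K p)"
      proof (cases "p \<in> Q_T T")
        case True
        then have "p \<in> UNIV \<times> {0..<T}" using Q_sub by auto
        then show ?thesis using True CK z by (cases "p \<in> K") (auto simp: indicator_def)
      qed (auto simp: indicator_def)
    qed
  qed
  then show i2: "integrable (lborel \<Otimes>\<^sub>M lborel) (\<lambda>p. indicator (Q_T T) p * f p)"
    by (simp add: lborel_prod)
  have Ql: "Q_T T \<inter> space lebesgue \<in> sets lebesgue" using Qb by simp
  have "integrable lebesgue (\<lambda>p. indicator (Q_T T) p * f p)"
  proof -
    have m: "(\<lambda>p. indicator (Q_T T) p * f p) \<in> borel_measurable lborel" using meas by simp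
    show ?thesis using intl integrable_completion[OF m] by simp
  qed
  then show "integrable (lebesgue_on (Q_T T)) f"
    by (subst integrable_restrict_space[OF Ql]) simp
  have "integral\<^sup>L (lebesgue_on (Q_T T)) f = integral\<^sup>L lebesgue (\<lambda>p. indicator (Q_T T) p * f p)"
    by (subst integral_restrict_space[OF Ql]) simp
  also have "\<dots> = integral\<^sup>L lborel (\<lambda>p. indicator (Q_T T) p * f p)"
    by (rule integral_completion) (use meas in simp)
  also have "\<dots> = (\<integral>p. indicator (Q_T T) p * f p \<partial>(lborel \<Otimes>\<^sub>M lborel))"
    by (simp add: lborel_prod)
  finally show "integral\<^sup>L (lebesgue_on (Q_T T)) f = (\<integral>p. indicator (Q_T T) p * f p \<partial>(lborel \<Otimes>\<^sub>M lborel))" .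
qed

lemma intcs:
  fixes f :: "real \<Rightarrow> real"
  assumes cf: "continuous_on UNIV f" and C: "compact C" and z: "\<And>x. x \<notin> C \<Longrightarrow> f x = 0"
  shows "integrable lborel f"
proof -
  have "compact (f ` C)" by (rule compact_continuous_image[OF continuous_on_subset[OF cf] C]) auto
  then obtain B where B: "\<And>y. y \<in> f ` C \<Longrightarrow> norm y \<le> B"
    using compact_imp_bounded bounded_iff by metis
  show ?thesis
  proof (rule Bochner_Integration.integrable_bound[where f="\<lambda>x. max B 0 * indicator C x"])
    have "integrable lborel (indicator C :: real \<Rightarrow> real)"
      using C by (intro integrable_real_indicator) (auto simp: compact_imp_closed intro: emeasure_compact_finite[simplified])
    then show "integrable lborel (\<lambda>x. max B 0 * indicator C x)" by simp
    show "f \<in> borel_measurable lborel" using borel_measurable_continuous_onI[OF cf] by simp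
    show "AE x in lborel. norm (f x) \<le> norm (max B 0 * indicator C x)"
      by (rule AE_I2) (use B z in \<open>fastforce simp: indicator_def\<close>)
  qed
qed

lemma eventually_zero_outside:
  fixes F :: "real \<Rightarrow> real"
  assumes C: "compact C" and z: "\<And>x. x \<notin> C \<Longrightarrow> F x = 0"
  shows "(F \<longlongrightarrow> 0) at_top" "(F \<longlongrightarrow> 0) at_bot"
proof -
  obtain R where R: "\<And>x. x \<in> C \<Longrightarrow> \<bar>x\<bar> \<le> R"
    using compact_imp_bounded[OF C] bounded_iff by (metis real_norm_def)
  have "\<forall>\<^sub>F x in at_top. F x = 0"
    unfolding eventually_at_top_linorder by (rule exI[of _ "R + 1"]) (use R z in force)
  then show "(F \<longlongrightarrow> 0) at_top" by (rule tendsto_eventually)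
  have "\<forall>\<^sub>F x in at_bot. F x = 0"
    unfolding eventually_at_bot_linorder by (rule exI[of _ "- R - 1"]) (use R z in force)
  then show "(F \<longlongrightarrow> 0) at_bot" by (rule tendsto_eventually)
qed

locale entset =
  fixes T c1 c2 :: real and G Gx :: "real \<Rightarrow> real \<Rightarrow> real"
    and \<phi> \<phi>x \<phi>t :: "real \<Rightarrow> real \<Rightarrow> real" and \<eta> \<eta>' \<Phi> \<Phi>' fa :: "real \<Rightarrow> real"
    and K :: "(real \<times> real) set"
  assumes T: "T > 0" and c1: "c1 \<ge> 0" and c2: "c2 \<ge> 1"
    and Gc: "continuous_on (UNIV \<times> {0..}) (\<lambda>(x,t). G x t)"
    and Gxc: "continuous_on (UNIV \<times> {0..}) (\<lambda>(x,t). Gx x t)"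
    and Gd: "\<And>x t. t > 0 \<Longrightarrow> ((\<lambda>y. G y t) has_real_derivative Gx x t) (at x)"
    and Gxb: "\<And>x t. t > 0 \<Longrightarrow> Gx x t \<ge> - c1"
    and \<phi>nn: "\<And>x t. t \<in> {0..<T} \<Longrightarrow> \<phi> x t \<ge> 0"
    and \<phi>xd: "\<And>x t. t \<in> {0..<T} \<Longrightarrow> ((\<lambda>y. \<phi> y t) has_real_derivative \<phi>x x t) (at x)"
    and \<phi>td: "\<And>x t. t \<in> {0..<T} \<Longrightarrow> ((\<lambda>s. \<phi> x s) has_real_derivative \<phi>t x t) (at t within {0..<T})"
    and \<phi>c: "continuous_on (UNIV \<times> {0..<T}) (\<lambda>(x,t). \<phi> x t)"
    and \<phi>xc: "continuous_on (UNIV \<times> {0..<T}) (\<lambda>(x,t). \<phi>x x t)"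
    and \<phi>tc: "continuous_on (UNIV \<times> {0..<T}) (\<lambda>(x,t). \<phi>t x t)"
    and Kc: "compact K" and KS: "K \<subseteq> UNIV \<times> {0..<T}"
    and Kz: "\<And>x t. t \<in> {0..<T} \<Longrightarrow> (x, t) \<notin> K \<Longrightarrow> \<phi> x t = 0"
    and \<eta>d: "\<And>u. (\<eta> has_real_derivative \<eta>' u) (at u)" and \<eta>'c: "continuous_on UNIV \<eta>'"
    and \<eta>anti: "antimono \<eta>"
    and \<Phi>d: "\<And>u. (\<Phi> has_real_derivative \<Phi>' u) (at u)"
    and fa: "\<And>u. u \<ge> 1 \<Longrightarrow> fa u = 1 / u"
begin

definition v :: "real \<Rightarrow> real" where "v t = sqrt (2 * c1 * t + c2)"
definition v' :: "real \<Rightarrow> real" where "v' t = c1 / v t"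

lemma v_ge1: "t \<ge> 0 \<Longrightarrow> v t \<ge> 1"
proof -
  assume t: "t \<ge> 0"
  have "0 \<le> 2 * c1 * t" using c1 t by simp
  then have "1 \<le> 2 * c1 * t + c2" using c2 by linarith
  then show ?thesis unfolding v_def by (simp add: real_le_rsqrt)
qed

lemma v_d: "t \<ge> 0 \<Longrightarrow> (v has_real_derivative v' t) (at t)"
proof -
  assume t: "t \<ge> 0"
  have pos: "0 < 2 * c1 * t + c2" using c1 c2 t by (smt (verit) mult_nonneg_nonneg)
  show ?thesis unfolding v_def v'_def using pos
    by (auto intro!: derivative_eq_intros simp: field_simps)
qed

lemma v_cont: "continuous_on UNIV v"
  unfolding v_def by (intro continuous_intros)

lemma v'_cont: "continuous_on {0..} v'"
  unfolding v'_def using v_ge1 by (intro continuous_intros continuous_on_subset[OF v_cont]) force+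

lemma \<eta>'_nonpos: "\<eta>' u \<le> 0"
proof (rule ccontr)
  assume "\<not> \<eta>' u \<le> 0"
  then obtain d where "d > 0" "\<And>h. h > 0 \<Longrightarrow> h < d \<Longrightarrow> \<eta> u < \<eta> (u + h)"
    using DERIV_pos_inc_right[OF \<eta>d[of u]] by force
  then have "\<eta> u < \<eta> (u + d / 2)" by simp
  moreover have "\<eta> (u + d / 2) \<le> \<eta> u" using \<eta>anti \<open>d > 0\<close> by (simp add: antimonoD)
  ultimately show False by simp
qed

lemma \<eta>_cont: "continuous_on UNIV \<eta>"
  using \<eta>d by (meson DERIV_isCont continuous_at_imp_continuous_on)
lemma \<Phi>_cont: "continuous_on UNIV \<Phi>"
  using \<Phi>d by (meson DERIV_isCont continuous_at_imp_continuous_on)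

abbreviation "S0 \<equiv> UNIV \<times> {0..<T::real}"

lemma Kball:
  assumes t: "t \<in> {0..<T}" and nK: "(x, t) \<notin> K"
  obtains e where "e > 0" "\<And>y s. dist (y, s) (x, t) < e \<Longrightarrow> (y, s) \<notin> K"
proof -
  have "open (- K)" using Kc compact_imp_closed by auto
  then obtain e where "e > 0" "ball (x, t) e \<subseteq> - K" using nK openE by (metis ComplI)
  then show ?thesis using that[of e] by (auto simp: dist_commute subset_iff)
qed

lemma \<phi>x_z: assumes t: "t \<in> {0..<T}" and nK: "(x, t) \<notin> K" shows "\<phi>x x t = 0"
proof -
  obtain e where e: "e > 0" "\<And>y s. dist (y, s) (x, t) < e \<Longrightarrow> (y, s) \<notin> K" using Kball[OF t nK] by blast
  have "((\<lambda>y. 0) has_real_derivative 0) (at x)" by simp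
  then have "((\<lambda>y. \<phi> y t) has_real_derivative 0) (at x)"
  proof (rule has_field_derivative_transform_within_open[of _ _ _ "ball x e"])
    show "open (ball x e)" "x \<in> ball x e" using e by auto
    fix y assume "y \<in> ball x e"
    then have "dist (y, t) (x, t) < e" by (simp add: dist_Pair_Pair dist_commute)
    then show "0 = \<phi> y t" using Kz[OF t] e by auto
  qed
  then show ?thesis using DERIV_unique \<phi>xd[OF t] by blast
qed

lemma \<phi>t_z: assumes t: "t \<in> {0..<T}" and nK: "(x, t) \<notin> K" shows "\<phi>t x t = 0"
proof -
  obtain e where e: "e > 0" "\<And>y s. dist (y, s) (x, t) < e \<Longrightarrow> (y, s) \<notin> K" using Kball[OF t nK] by blast
  have "((\<lambda>s. 0) has_real_derivative 0) (at t within {0..<T})" by simp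
  then have "((\<lambda>s. \<phi> x s) has_real_derivative 0) (at t within {0..<T})"
  proof (rule has_field_derivative_transform_within[OF _ e(1) t])
    fix s assume "s \<in> {0..<T}" "dist s t < e"
    then have "dist (x, s) (x, t) < e" by (simp add: dist_Pair_Pair)
    then show "0 = \<phi> x s" using Kz[OF \<open>s \<in> {0..<T}\<close>] e by auto
  qed
  moreover have "at t within {0..<T} \<noteq> bot" using t T by (simp add: trivial_limit_within)
  ultimately show ?thesis using has_field_derivative_unique \<phi>td[OF t] by blast
qed

lemma tmax: obtains T' where "0 < T'" "T' < T" "\<And>p. p \<in> K \<Longrightarrow> snd p < T'"
proof (cases "K = {}")
  case True then show ?thesis using that[of "T / 2"] T by auto
next
  case False
  have "compact (snd ` K)" using Kc by (intro compact_continuous_image continuous_intros)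
  then obtain m where m: "m \<in> snd ` K" "\<And>s. s \<in> snd ` K \<Longrightarrow> s \<le> m"
    using compact_attains_sup False by (metis image_is_empty)
  have "m < T" "0 \<le> m" using m(1) KS by auto
  then show ?thesis using that[of "(m + T) / 2"] m by fastforce
qed

end

context entset begin

definition Fn :: "real \<times> real \<Rightarrow> real" where
  "Fn p = \<eta> (v (snd p)) * \<phi>t (fst p) (snd p) + \<Phi> (v (snd p)) * G (fst p) (snd p) * \<phi>x (fst p) (snd p)
     + (\<Phi> (v (snd p)) - \<eta>' (v (snd p)) / v (snd p)) * Gx (fst p) (snd p) * \<phi> (fst p) (snd p)"
definition Dt :: "real \<times> real \<Rightarrow> real" where
  "Dt p = \<eta>' (v (snd p)) * v' (snd p) * \<phi> (fst p) (snd p) + \<eta> (v (snd p)) * \<phi>t (fst p) (snd p)"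
definition Dx :: "real \<times> real \<Rightarrow> real" where
  "Dx p = \<Phi> (v (snd p)) * (Gx (fst p) (snd p) * \<phi> (fst p) (snd p) + G (fst p) (snd p) * \<phi>x (fst p) (snd p))"
definition Rn :: "real \<times> real \<Rightarrow> real" where
  "Rn p = - \<eta>' (v (snd p)) * \<phi> (fst p) (snd p) * (c1 + Gx (fst p) (snd p)) / v (snd p)"

lemma decomp: "snd p \<ge> 0 \<Longrightarrow> Fn p = Dt p + Dx p + Rn p"
proof -
  assume "snd p \<ge> 0"
  then have "v (snd p) \<ge> 1" by (rule v_ge1)
  then show ?thesis unfolding Fn_def Dt_def Dx_def Rn_def v'_def
    by (simp add: field_simps)
qed

lemma Rn_nonneg: "snd p > 0 \<Longrightarrow> snd p < T \<Longrightarrow> Rn p \<ge> 0"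
proof -
  assume t: "snd p > 0" "snd p < T"
  have "0 \<le> - \<eta>' (v (snd p))" using \<eta>'_nonpos by simp
  moreover have "0 \<le> \<phi> (fst p) (snd p)" using \<phi>nn t by simp
  moreover have "0 \<le> c1 + Gx (fst p) (snd p)" using Gxb[of "snd p" "fst p"] t(1) by linarith
  moreover have "0 < v (snd p)" using v_ge1[of "snd p"] t by simp
  ultimately show ?thesis unfolding Rn_def
    by (intro divide_nonneg_pos mult_nonneg_nonneg) auto
qed

lemma cS0: 
  shows c\<phi>: "continuous_on S0 (\<lambda>p. \<phi> (fst p) (snd p))"
    and c\<phi>x: "continuous_on S0 (\<lambda>p. \<phi>x (fst p) (snd p))"
    and c\<phi>t: "continuous_on S0 (\<lambda>p. \<phi>t (fst p) (snd p))"
    and cG: "continuous_on S0 (\<lambda>p. G (fst p) (snd p))"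
    and cGx: "continuous_on S0 (\<lambda>p. Gx (fst p) (snd p))"
proof -
  have sub: "S0 \<subseteq> UNIV \<times> {0..}" by auto
  show "continuous_on S0 (\<lambda>p. \<phi> (fst p) (snd p))" "continuous_on S0 (\<lambda>p. \<phi>x (fst p) (snd p))"
    "continuous_on S0 (\<lambda>p. \<phi>t (fst p) (snd p))"
    using \<phi>c \<phi>xc \<phi>tc by (auto simp: case_prod_beta)
  show "continuous_on S0 (\<lambda>p. G (fst p) (snd p))" "continuous_on S0 (\<lambda>p. Gx (fst p) (snd p))"
    using continuous_on_subset[OF Gc sub] continuous_on_subset[OF Gxc sub] by (auto simp: case_prod_beta)
qed

lemma cvh: "continuous_on UNIV h \<Longrightarrow> continuous_on S0 (\<lambda>p. h (v (snd p)))"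
  by (rule continuous_on_compose2[of UNIV h]) (auto intro!: continuous_intros continuous_on_compose2[OF v_cont])

lemma cv': "continuous_on S0 (\<lambda>p. v' (snd p))"
  by (rule continuous_on_compose2[OF v'_cont]) (auto intro!: continuous_intros)

lemma cv: "continuous_on S0 (\<lambda>p. v (snd p))"
  by (rule continuous_on_compose2[OF v_cont]) (auto intro!: continuous_intros)

lemma vnz: "p \<in> S0 \<Longrightarrow> v (snd p) \<noteq> 0" using v_ge1[of "snd p"] by auto

lemma cont_all:
  shows "continuous_on S0 Fn" "continuous_on S0 Dt" "continuous_on S0 Dx" "continuous_on S0 Rn"
proof -
  have vne: "\<forall>p\<in>S0. v (snd p) \<noteq> 0" using vnz by blast
  show "continuous_on S0 Fn" unfolding Fn_def
    by (intro continuous_intros cS0 cvh[OF \<eta>_cont] cvh[OF \<eta>'c] cvh[OF \<Phi>_cont] cv' cv vne)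
  show "continuous_on S0 Dt" unfolding Dt_def
    by (intro continuous_intros cS0 cvh[OF \<eta>_cont] cvh[OF \<eta>'c] cvh[OF \<Phi>_cont] cv' cv vne)
  show "continuous_on S0 Dx" unfolding Dx_def
    by (intro continuous_intros cS0 cvh[OF \<eta>_cont] cvh[OF \<eta>'c] cvh[OF \<Phi>_cont] cv' cv vne)
  show "continuous_on S0 Rn" unfolding Rn_def
    by (intro continuous_intros cS0 cvh[OF \<eta>_cont] cvh[OF \<eta>'c] cvh[OF \<Phi>_cont] cv' cv vne)
qed

lemma zero_all:
  assumes "p \<in> S0" "p \<notin> K"
  shows "Fn p = 0" "Dt p = 0" "Dx p = 0" "Rn p = 0"
proof -
  obtain x t where p: "p = (x, t)" by (cases p)
  have t: "t \<in> {0..<T}" using assms p by auto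
  have z: "\<phi> x t = 0" "\<phi>x x t = 0" "\<phi>t x t = 0"
    using Kz[OF t] \<phi>x_z[OF t] \<phi>t_z[OF t] assms p by auto
  show "Fn p = 0" "Dt p = 0" "Dx p = 0" "Rn p = 0"
    unfolding Fn_def Dt_def Dx_def Rn_def p using z by simp_all
qed

lemmas Qint_all = Qint[OF cont_all(1) Kc KS zero_all(1)] Qint[OF cont_all(2) Kc KS zero_all(2)]
  Qint[OF cont_all(3) Kc KS zero_all(3)] Qint[OF cont_all(4) Kc KS zero_all(4)]

end

lemma Qspace: "space (lebesgue_on (Q_T T)) = Q_T T"
proof -
  have "Q_T T \<in> sets borel" using Q_open by auto
  then show ?thesis by simp
qed

context entset begin

lemma cline: "continuous_on S0 f \<Longrightarrow> A \<subseteq> {0..<T} \<Longrightarrow> continuous_on A (\<lambda>t. f (x, t))"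
  by (rule continuous_on_compose2[of S0 f]) (auto intro!: continuous_intros)

lemma cline_x: "continuous_on S0 f \<Longrightarrow> t \<in> {0..<T} \<Longrightarrow> continuous_on UNIV (\<lambda>x. f (x, t))"
  by (rule continuous_on_compose2[of S0 f]) (auto intro!: continuous_intros)

lemma Dx_inner: "(\<integral>x. indicator (Q_T T) (x, t) * Dx (x, t) \<partial>lborel) = 0"
proof (cases "t \<in> {0<..<T}")
  case False
  then have "\<And>x. indicator (Q_T T) (x, t) = (0::real)" unfolding Q_T_def by (auto simp: indicator_def)
  then show ?thesis by simp
next
  case True
  then have i1: "\<And>x. indicator (Q_T T) (x, t) = (1::real)" unfolding Q_T_def by (auto simp: indicator_def)
  have t: "t \<in> {0..<T}" "t > 0" using True by auto
  define F where "F x = \<Phi> (v t) * (G x t * \<phi> x t)" for x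
  have dF: "(F has_real_derivative Dx (x, t)) (at x)" for x
  proof -
    have "((\<lambda>x. G x t * \<phi> x t) has_real_derivative Gx x t * \<phi> x t + \<phi>x x t * G x t) (at x)"
      by (rule DERIV_mult[OF Gd[OF t(2)] \<phi>xd[OF t(1)]])
    from DERIV_cmult[OF this, of "\<Phi> (v t)"] show ?thesis
      unfolding F_def Dx_def by (simp add: algebra_simps)
  qed
  have cD: "continuous_on UNIV (\<lambda>x. Dx (x, t))" by (rule cline_x[OF cont_all(3) t(1)])
  have C: "compact (fst ` K)" using Kc by (intro compact_continuous_image continuous_intros)
  have zK: "\<And>x. x \<notin> fst ` K \<Longrightarrow> (x, t) \<notin> K" by force
  have iD: "integrable lborel (\<lambda>x. Dx (x, t))"
    by (rule intcs[OF cD C]) (use zero_all(3) zK t in auto)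
  have Fz: "\<And>x. x \<notin> fst ` K \<Longrightarrow> F x = 0" unfolding F_def using Kz[OF t(1)] zK by simp
  have l: "(F \<longlongrightarrow> 0) at_top" "(F \<longlongrightarrow> 0) at_bot" using eventually_zero_outside[OF C, of F] Fz by auto
  have "(\<integral>x. Dx (x, t) \<partial>lborel) = 0"
    by (rule integral_deriv_zero[OF dF cD iD l])
  then show ?thesis using i1 by simp
qed

lemma Dx_zero: "integral\<^sup>L (lebesgue_on (Q_T T)) Dx = 0"
proof -
  note Q = Qint[OF cont_all(3) Kc KS zero_all(3)]
  have eq: "case_prod (\<lambda>x t. indicator (Q_T T) (x, t) * Dx (x, t)) = (\<lambda>p. indicator (Q_T T) p * Dx p)"
    by (rule ext) (simp split: prod.split)
  have int': "integrable (lborel \<Otimes>\<^sub>M lborel) (case_prod (\<lambda>x t. indicator (Q_T T) (x, t) * Dx (x, t)))"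
    unfolding eq using Q(2) .
  have "integral\<^sup>L (lebesgue_on (Q_T T)) Dx = integral\<^sup>L (lborel \<Otimes>\<^sub>M lborel) (case_prod (\<lambda>x t. indicator (Q_T T) (x, t) * Dx (x, t)))"
    unfolding eq using Q(3) .
  also have "\<dots> = (\<integral>t. (\<integral>x. indicator (Q_T T) (x, t) * Dx (x, t) \<partial>lborel) \<partial>lborel)"
    using lborel_pair.integral_snd[OF int'] by simp
  also have "\<dots> = 0" by (simp add: Dx_inner)
  finally show ?thesis .
qed

end

context entset begin

lemma Dt_inner:
  assumes T': "0 < T'" "T' < T" "\<And>p. p \<in> K \<Longrightarrow> snd p < T'"
  shows "(\<integral>t. indicator (Q_T T) (x, t) * Dt (x, t) \<partial>lborel) = - (\<eta> (v 0) * \<phi> x 0)"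
proof -
  have c1': "continuous_on {0<..<T} (\<lambda>t. Dt (x, t))" by (rule cline[OF cont_all(2)]) auto
  have c2': "continuous_on {0..T'} (\<lambda>t. Dt (x, t))" by (rule cline[OF cont_all(2)]) (use T' in auto)
  have m1: "(\<lambda>t. indicator {0<..<T} t *\<^sub>R Dt (x, t)) \<in> borel_measurable lborel"
    using borel_measurable_continuous_on_indicator[OF _ c1'] by simp
  have m2: "(\<lambda>t. indicator {0..T'} t *\<^sub>R Dt (x, t)) \<in> borel_measurable lborel"
    using borel_measurable_continuous_on_indicator[OF _ c2'] by simp
  have iQ: "\<And>t. indicator (Q_T T) (x, t) = (indicator {0<..<T} t :: real)"
    unfolding Q_T_def by (auto simp: indicator_def)
  have "(\<integral>t. indicator (Q_T T) (x, t) * Dt (x, t) \<partial>lborel) = (\<integral>t. indicator {0..T'} t *\<^sub>R Dt (x, t) \<partial>lborel)"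
    unfolding iQ
  proof (rule integral_cong_AE)
    show "(\<lambda>t. indicator {0<..<T} t * Dt (x, t)) \<in> borel_measurable lborel" using m1 by simp
    show "(\<lambda>t. indicator {0..T'} t *\<^sub>R Dt (x, t)) \<in> borel_measurable lborel" using m2 .
    show "AE t in lborel. indicator {0<..<T} t * Dt (x, t) = indicator {0..T'} t *\<^sub>R Dt (x, t)"
      using AE_lborel_singleton[of 0]
    proof eventually_elim
      fix t :: real assume t0: "t \<noteq> 0"
      show "indicator {0<..<T} t * Dt (x, t) = indicator {0..T'} t *\<^sub>R Dt (x, t)"
      proof (cases "T' < t \<and> t < T")
        case True
        then have "(x, t) \<notin> K" using T'(3) by force
        then have "Dt (x, t) = 0" using zero_all(2)[of "(x, t)"] True T' by auto
        then show ?thesis by simp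
      next
        case False
        then show ?thesis using t0 T' by (auto simp: indicator_def)
      qed
    qed
  qed
  also have "\<dots> = \<eta> (v T') * \<phi> x T' - \<eta> (v 0) * \<phi> x 0"
  proof (rule integral_FTC_Icc[where F="\<lambda>s. \<eta> (v s) * \<phi> x s"])
    show "0 \<le> T'" using T' by simp
    show "continuous_on {0..T'} (\<lambda>t. Dt (x, t))" using c2' .
    fix s assume s: "0 \<le> s" "s \<le> T'"
    have d1: "((\<lambda>s. \<eta> (v s)) has_real_derivative \<eta>' (v s) * v' s) (at s within {0..T'})"
      by (rule has_field_derivative_at_within, rule DERIV_chain2[OF \<eta>d v_d]) (use s in simp)
    have d2: "((\<lambda>s. \<phi> x s) has_real_derivative \<phi>t x s) (at s within {0..T'})"
      by (rule DERIV_subset[OF \<phi>td]) (use s T' in auto)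
    have "((\<lambda>s. \<eta> (v s) * \<phi> x s) has_real_derivative Dt (x, s)) (at s within {0..T'})"
      using DERIV_mult[OF d1 d2] unfolding Dt_def by (simp add: algebra_simps)
    then show "((\<lambda>s. \<eta> (v s) * \<phi> x s) has_vector_derivative Dt (x, s)) (at s within {0..T'})"
      by (simp add: has_real_derivative_iff_has_vector_derivative)
  qed
  also have "\<phi> x T' = 0"
  proof -
    have "(x, T') \<notin> K" using T'(3) by force
    then show ?thesis using Kz[of T' x] T' by simp
  qed
  finally show ?thesis by simp
qed

lemma G0:
  shows "integrable lborel (\<lambda>x. \<eta> (v 0) * \<phi> x 0)" "(\<lambda>x. \<eta> (v 0) * \<phi> x 0) \<in> borel_measurable lborel"
proof -
  have c: "continuous_on UNIV (\<lambda>x. \<phi> x 0)"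
    using cline_x[OF c\<phi>, of 0] T by simp
  have C: "compact (fst ` K)" using Kc by (intro compact_continuous_image continuous_intros)
  have z: "\<And>x. x \<notin> fst ` K \<Longrightarrow> \<eta> (v 0) * \<phi> x 0 = 0"
  proof -
    fix x assume "x \<notin> fst ` K"
    then have "(x, 0) \<notin> K" by force
    then show "\<eta> (v 0) * \<phi> x 0 = 0" using Kz[of 0 x] T by simp
  qed
  show "integrable lborel (\<lambda>x. \<eta> (v 0) * \<phi> x 0)"
    by (rule intcs[OF _ C z]) (intro continuous_intros c)
  show "(\<lambda>x. \<eta> (v 0) * \<phi> x 0) \<in> borel_measurable lborel"
    using borel_measurable_continuous_onI[OF continuous_on_mult[OF continuous_on_const c]] by simp
qed

lemma Dt_val: "integral\<^sup>L (lebesgue_on (Q_T T)) Dt = - (\<integral>x. \<eta> (v 0) * \<phi> x 0 \<partial>lborel)"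
proof -
  obtain T' where T': "0 < T'" "T' < T" "\<And>p. p \<in> K \<Longrightarrow> snd p < T'" using tmax by blast
  note Q = Qint[OF cont_all(2) Kc KS zero_all(2)]
  have eq: "case_prod (\<lambda>x t. indicator (Q_T T) (x, t) * Dt (x, t)) = (\<lambda>p. indicator (Q_T T) p * Dt p)"
    by (rule ext) (simp split: prod.split)
  have int': "integrable (lborel \<Otimes>\<^sub>M lborel) (case_prod (\<lambda>x t. indicator (Q_T T) (x, t) * Dt (x, t)))"
    unfolding eq using Q(2) .
  have "integral\<^sup>L (lebesgue_on (Q_T T)) Dt = integral\<^sup>L (lborel \<Otimes>\<^sub>M lborel) (case_prod (\<lambda>x t. indicator (Q_T T) (x, t) * Dt (x, t)))"
    unfolding eq using Q(3) .
  also have "\<dots> = (\<integral>x. (\<integral>t. indicator (Q_T T) (x, t) * Dt (x, t) \<partial>lborel) \<partial>lborel)"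
    using lborel_pair.integral_fst[OF int'] by simp
  also have "\<dots> = (\<integral>x. - (\<eta> (v 0) * \<phi> x 0) \<partial>lborel)" by (simp add: Dt_inner[OF T'])
  finally show ?thesis by simp
qed

theorem ent_main:
  shows "integrable (lebesgue_on (Q_T T)) Fn"
    and "integrable lebesgue (\<lambda>x. \<eta> (v 0) * \<phi> x 0)"
    and "integral\<^sup>L (lebesgue_on (Q_T T)) Fn + integral\<^sup>L lebesgue (\<lambda>x. \<eta> (v 0) * \<phi> x 0) \<ge> 0"
proof -
  note QF = Qint[OF cont_all(1) Kc KS zero_all(1)]
  note QDt = Qint[OF cont_all(2) Kc KS zero_all(2)]
  note QDx = Qint[OF cont_all(3) Kc KS zero_all(3)]
  note QR = Qint[OF cont_all(4) Kc KS zero_all(4)]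
  show "integrable (lebesgue_on (Q_T T)) Fn" using QF(1) .
  show "integrable lebesgue (\<lambda>x. \<eta> (v 0) * \<phi> x 0)"
    using G0 integrable_completion by blast
  have Gl: "integral\<^sup>L lebesgue (\<lambda>x. \<eta> (v 0) * \<phi> x 0) = (\<integral>x. \<eta> (v 0) * \<phi> x 0 \<partial>lborel)"
    by (rule integral_completion[OF G0(2)])
  have "integral\<^sup>L (lebesgue_on (Q_T T)) Fn = integral\<^sup>L (lebesgue_on (Q_T T)) (\<lambda>p. Dt p + Dx p + Rn p)"
    by (rule Bochner_Integration.integral_cong) (auto simp: Qspace Q_T_def intro!: decomp)
  also have "\<dots> = integral\<^sup>L (lebesgue_on (Q_T T)) Dt + integral\<^sup>L (lebesgue_on (Q_T T)) Dx
      + integral\<^sup>L (lebesgue_on (Q_T T)) Rn"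
    using QDt(1) QDx(1) QR(1) by simp
  finally have "integral\<^sup>L (lebesgue_on (Q_T T)) Fn = - (\<integral>x. \<eta> (v 0) * \<phi> x 0 \<partial>lborel) + integral\<^sup>L (lebesgue_on (Q_T T)) Rn"
    using Dt_val Dx_zero by simp
  moreover have "integral\<^sup>L (lebesgue_on (Q_T T)) Rn \<ge> 0"
    by (rule Bochner_Integration.integral_nonneg) (auto simp: Qspace Q_T_def intro!: Rn_nonneg)
  ultimately show "integral\<^sup>L (lebesgue_on (Q_T T)) Fn + integral\<^sup>L lebesgue (\<lambda>x. \<eta> (v 0) * \<phi> x 0) \<ge> 0"
    unfolding Gl by linarith
qed

end

theorem lemma5p6:
  fixes T \<epsilon> :: real and \<kappa>0 \<rho>0 :: "real \<Rightarrow> real" and \<rho> :: "real \<Rightarrow> real \<Rightarrow> real"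
  assumes "T > 0" and "0 < \<epsilon>" and "\<epsilon> \<le> 1"
    and "Lip_I \<kappa>0" and "C0_inf_I \<rho>0" and "heat_solution \<rho> \<rho>0"
  shows "let c1 = Linf_I (\<lambda>x. ((deriv ^^ 2) \<rho>0 x)\<^sup>2)
                  + Linf_I (deriv \<rho>0) * Linf_I ((deriv ^^ 3) \<rho>0);
             c2 = (Linf_I (deriv \<kappa>0) + 1)\<^sup>2;
             Sbar = (\<lambda>(x::real) (t::real). sqrt (2 * c1 * t + c2))
         in entropy_supersol T (g_hat \<rho>) (\<lambda>x t. deriv (\<lambda>y. g_hat \<rho> y t) x) (f_a \<epsilon>) Sbar
              (\<lambda>x. Linf_I (deriv \<kappa>0) + 1)"
proof -
  note T = assms(1) and eps = assms(3)
  define L where "L = Linf_I (deriv \<kappa>0)"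
  define c1 where "c1 = Linf_I (\<lambda>x. ((deriv ^^ 2) \<rho>0 x)\<^sup>2) + Linf_I (deriv \<rho>0) * Linf_I ((deriv ^^ 3) \<rho>0)"
  define c2 where "c2 = (L + 1)\<^sup>2"
  have L0: "L \<ge> 0" unfolding L_def by (rule Linf_nonneg)
  have c1: "c1 \<ge> 0" unfolding c1_def using Linf_nonneg by (simp add: add_nonneg_nonneg)
  have c2: "c2 \<ge> 1"
  proof -
    have "1 * 1 \<le> (L + 1) * (L + 1)" using L0 by (intro mult_mono) auto
    then show ?thesis unfolding c2_def by (simp add: power2_eq_square)
  qed
  obtain a b where ab: "0 < a" "a \<le> b" "b < 1" "\<And>x. x \<notin> {a..b} \<Longrightarrow> \<rho>0 x = 0"
    and fd: "\<And>n x. ((deriv ^^ n) \<rho>0) differentiable (at x)"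
    using assms(5) unfolding C0_inf_I_def by blast
  interpret R: rhoset \<rho>0 a b \<rho>
    by unfold_locales (use ab fd assms(6) in auto)
  define G where "G x t = - (R.H.U 2 x t * R.H.U 1 x t)" for x t
  have B1: "Bf \<rho>0 1 = Linf_I (deriv \<rho>0)" unfolding Bf_def by simp
  have B3: "Bf \<rho>0 3 = Linf_I ((deriv ^^ 3) \<rho>0)" unfolding Bf_def by simp
  have B2: "(Bf \<rho>0 2)\<^sup>2 = Linf_I (\<lambda>x. ((deriv ^^ 2) \<rho>0 x)\<^sup>2)" unfolding Bf_def using Linf_nonneg by simp
  have Gxb: "R.Gx x t \<ge> - c1" for x t
  proof -
    have u1: "\<bar>R.H.U 1 x t\<bar> \<le> Bf \<rho>0 1" and u2: "\<bar>R.H.U 2 x t\<bar> \<le> Bf \<rho>0 2" and u3: "\<bar>R.H.U 3 x t\<bar> \<le> Bf \<rho>0 3"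
      using R.H.U_bound by auto
    have "R.H.U 3 x t * R.H.U 1 x t \<le> \<bar>R.H.U 3 x t\<bar> * \<bar>R.H.U 1 x t\<bar>" by (simp add: abs_mult[symmetric])
    also have "\<dots> \<le> Bf \<rho>0 3 * Bf \<rho>0 1" using u1 u3 by (intro mult_mono) auto
    finally have p1: "R.H.U 3 x t * R.H.U 1 x t \<le> Bf \<rho>0 3 * Bf \<rho>0 1" .
    have "R.H.U 2 x t * R.H.U 2 x t = \<bar>R.H.U 2 x t\<bar>\<^sup>2" by (simp add: power2_eq_square)
    also have "\<dots> \<le> (Bf \<rho>0 2)\<^sup>2" using u2 by (intro power_mono) auto
    finally have p2: "R.H.U 2 x t * R.H.U 2 x t \<le> (Bf \<rho>0 2)\<^sup>2" .
    show ?thesis using p1 p2 unfolding R.Gx_def c1_def B1 B2 B3 by (simp add: mult.commute)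
  qed
  have Uc: "\<And>k. k \<le> 3 \<Longrightarrow> continuous_on (UNIV \<times> {0..}) (\<lambda>p. R.H.U k (fst p) (snd p))"
    using R.H.U_cont by (simp add: case_prod_beta)
  have Gc: "continuous_on (UNIV \<times> {0..}) (\<lambda>(x,t). G x t)"
    unfolding G_def case_prod_beta by (intro continuous_intros Uc) auto
  have Gxc: "continuous_on (UNIV \<times> {0..}) (\<lambda>(x,t). R.Gx x t)"
    unfolding R.Gx_def case_prod_beta by (intro continuous_intros Uc) auto
  have gG: "\<And>x t. t > 0 \<Longrightarrow> g_hat \<rho> x t = G x t" unfolding G_def using R.g_eq by simp
  have Gd: "\<And>x t. t > 0 \<Longrightarrow> ((\<lambda>y. G y t) has_real_derivative R.Gx x t) (at x)"
  proof -
    fix x t :: real assume t: "t > 0"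
    have "(\<lambda>y. G y t) = (\<lambda>y. g_hat \<rho> y t)" using gG[OF t] by auto
    then show "((\<lambda>y. G y t) has_real_derivative R.Gx x t) (at x)" using R.g_dx[OF t] by simp
  qed
  have Sc: "continuous_on UNIV (\<lambda>p::real\<times>real. sqrt (2 * c1 * snd p + c2))"
    by (intro continuous_intros)
  show ?thesis
    unfolding Let_def c1_def[symmetric] L_def[symmetric] c2_def[symmetric] entropy_supersol_def
  proof (intro conjI allI impI)
    have "(\<lambda>p::real\<times>real. sqrt (2 * c1 * snd p + c2)) \<in> borel_measurable (lebesgue_on (Q_T T))"
      by (rule continuous_imp_measurable_on_sets_lebesgue[OF continuous_on_subset[OF Sc]])
        (use Q_open in auto)
    then show "(\<lambda>(x, t). sqrt (2 * c1 * t + c2)) \<in> borel_measurable (lebesgue_on (Q_T T))"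
      by (simp add: case_prod_beta)
    show "\<exists>M. AE p in lebesgue_on (Q_T T). \<bar>(\<lambda>(x, t). sqrt (2 * c1 * t + c2)) p\<bar> \<le> M"
    proof (rule exI[of _ "sqrt (2 * c1 * T + c2)"], rule AE_I2)
      fix p assume "p \<in> space (lebesgue_on (Q_T T))"
      then have p: "0 < snd p" "snd p < T" by (auto simp: Qspace Q_T_def)
      have "2 * c1 * snd p + c2 \<le> 2 * c1 * T + c2" using p c1 by (simp add: mult_left_mono)
      moreover have "0 \<le> 2 * c1 * snd p + c2" using p c1 c2 by (smt (verit) mult_nonneg_nonneg)
      ultimately show "\<bar>(\<lambda>(x, t). sqrt (2 * c1 * t + c2)) p\<bar> \<le> sqrt (2 * c1 * T + c2)"
        by (auto simp: case_prod_beta)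
    qed
    fix \<phi> \<phi>x \<phi>t :: "real \<Rightarrow> real \<Rightarrow> real" and \<eta> \<eta>' \<Phi> :: "real \<Rightarrow> real"
    assume tf: "test_fun T \<phi> \<phi>x \<phi>t" and ep: "entropy_pair (f_a \<epsilon>) \<eta> \<eta>' \<Phi>"
    obtain K where K: "compact K" "K \<subseteq> UNIV \<times> {0..<T}" "\<And>x t. t \<in> {0..<T} \<Longrightarrow> (x, t) \<notin> K \<Longrightarrow> \<phi> x t = 0"
      using tf unfolding test_fun_def by blast
    interpret E: entset T c1 c2 G R.Gx \<phi> \<phi>x \<phi>t \<eta> \<eta>' \<Phi> "\<lambda>u. deriv (f_a \<epsilon>) u * \<eta>' u" "f_a \<epsilon>" K
    proof unfold_locales
      show "\<And>u. 1 \<le> u \<Longrightarrow> f_a \<epsilon> u = 1 / u" using eps unfolding f_a_def by auto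
    qed (use T c1 c2 Gc Gxc Gd Gxb K tf ep in \<open>auto simp: test_fun_def entropy_pair_def\<close>)
    have "E.v 0 = sqrt c2" by (simp add: E.v_def)
    then have v0: "E.v 0 = L + 1" unfolding c2_def using L0 by simp
    have FF: "\<And>p. p \<in> space (lebesgue_on (Q_T T)) \<Longrightarrow>
      (\<lambda>(x, t). \<eta> (sqrt (2 * c1 * t + c2)) * \<phi>t x t + \<Phi> (sqrt (2 * c1 * t + c2)) * g_hat \<rho> x t * \<phi>x x t +
        (\<Phi> (sqrt (2 * c1 * t + c2)) - f_a \<epsilon> (sqrt (2 * c1 * t + c2)) * \<eta>' (sqrt (2 * c1 * t + c2))) *
        deriv (\<lambda>y. g_hat \<rho> y t) x * \<phi> x t) p = E.Fn p"
    proof -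
      fix p assume "p \<in> space (lebesgue_on (Q_T T))"
      then have t: "snd p > 0" by (auto simp: Qspace Q_T_def)
      have v1: "E.v (snd p) \<ge> 1" using E.v_ge1 t by simp
      have "f_a \<epsilon> (E.v (snd p)) = 1 / E.v (snd p)" using E.fa v1 by simp
      then show "?thesis p"
        unfolding E.Fn_def using gG[OF t] R.gx_eq[OF t] unfolding E.v_def
        by (simp add: case_prod_beta)
    qed
    have int1: "integrable (lebesgue_on (Q_T T)) E.Fn" by (rule E.ent_main(1))
    show "integrable (lebesgue_on (Q_T T)) (\<lambda>(x, t). \<eta> (sqrt (2 * c1 * t + c2)) * \<phi>t x t + \<Phi> (sqrt (2 * c1 * t + c2)) * g_hat \<rho> x t * \<phi>x x t +
        (\<Phi> (sqrt (2 * c1 * t + c2)) - f_a \<epsilon> (sqrt (2 * c1 * t + c2)) * \<eta>' (sqrt (2 * c1 * t + c2))) *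
        deriv (\<lambda>y. g_hat \<rho> y t) x * \<phi> x t)"
    proof (rule Bochner_Integration.integrable_cong[THEN iffD2, OF refl])
      show "integrable (lebesgue_on (Q_T T)) E.Fn" by (rule int1)
      fix p assume "p \<in> space (lebesgue_on (Q_T T))"
      then show "(\<lambda>(x, t). \<eta> (sqrt (2 * c1 * t + c2)) * \<phi>t x t + \<Phi> (sqrt (2 * c1 * t + c2)) * g_hat \<rho> x t * \<phi>x x t +
        (\<Phi> (sqrt (2 * c1 * t + c2)) - f_a \<epsilon> (sqrt (2 * c1 * t + c2)) * \<eta>' (sqrt (2 * c1 * t + c2))) *
        deriv (\<lambda>y. g_hat \<rho> y t) x * \<phi> x t) p = E.Fn p" by (rule FF)
    qed
    show "integrable lebesgue (\<lambda>x. \<eta> (L + 1) * \<phi> x 0)"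
      using E.ent_main(2) unfolding v0 .
    have "integral\<^sup>L (lebesgue_on (Q_T T)) (\<lambda>(x, t). \<eta> (sqrt (2 * c1 * t + c2)) * \<phi>t x t + \<Phi> (sqrt (2 * c1 * t + c2)) * g_hat \<rho> x t * \<phi>x x t +
        (\<Phi> (sqrt (2 * c1 * t + c2)) - f_a \<epsilon> (sqrt (2 * c1 * t + c2)) * \<eta>' (sqrt (2 * c1 * t + c2))) *
        deriv (\<lambda>y. g_hat \<rho> y t) x * \<phi> x t) = integral\<^sup>L (lebesgue_on (Q_T T)) E.Fn"
      by (rule Bochner_Integration.integral_cong[OF refl FF])
    then show "0 \<le> integral\<^sup>L (lebesgue_on (Q_T T)) (\<lambda>(x, t). \<eta> (sqrt (2 * c1 * t + c2)) * \<phi>t x t + \<Phi> (sqrt (2 * c1 * t + c2)) * g_hat \<rho> x t * \<phi>x x t +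
        (\<Phi> (sqrt (2 * c1 * t + c2)) - f_a \<epsilon> (sqrt (2 * c1 * t + c2)) * \<eta>' (sqrt (2 * c1 * t + c2))) *
        deriv (\<lambda>y. g_hat \<rho> y t) x * \<phi> x t) + integral\<^sup>L lebesgue (\<lambda>x. \<eta> (L + 1) * \<phi> x 0)"
      using E.ent_main(3) unfolding v0 by simp
  qed
qed

end
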